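(* Let $n\ge1$ and let $\lambda$ be a partition with $\ell(\lambda)\le n$. Then \[ \mathrm{spo}_{\lambda}(x_1,\dots,x_n;y)=\frac{1}{D}\det\left(x_i^{\lambda_j+n-j+1}-\bar x_i^{\lambda_j+n-j+1}+y\left(x_i^{\lambda_j+n-j}-\bar x_i^{\lambda_j+n-j}\right)\right)_{1\le i,j\le n}, \] where $D=\prod_{i=1}^n(x_i-\bar x_i)\prod_{1\le i<j\le n}(x_i+\bar x_i-x_j-\bar x_j)$.
   Context: $\bar x=1/x$. Here $m=1$, i.e. $Y=(y)$ is a single variable. Orthosymplectic Schur function: order $1<\bar1<\cdots<n<\bar n<1'<\cdots<m'$; an orthosymplectic tableau of shape $\lambda$ is a filling of the Young diagram of $\lambda$ such that the entries from $\{1,\bar1,\dots,n,\bar n\}$ form a symplectic tableau (weakly increasing along rows, strictly increasing down columns, entries in row $i$ are $\ge i$) and the remaining primed entries form a skew filling strictly increasing along rows and weakly increasing down columns; weight $\prod_i x_i^{\#i-\#\bar i}\prod_j y_j^{\#j'}$; $\mathrm{spo}_\lambda(X;Y)$ is the sum of weights over all such tableaux. *)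

theory Defs
  imports "Jordan_Normal_Form.Determinant" "HOL-Library.FuncSet"
begin

text \<open>Entries of an orthosymplectic tableau: Unb i = i, Bar i = \<bar>i, Pr j = j'.
  Order: 1 < 1bar < ... < n < nbar < 1' < ... < m', encoded by the key below.\<close>

datatype ospent = Unb nat | Bar nat | Pr nat

fun osp_key :: "nat \<Rightarrow> ospent \<Rightarrow> nat" where
  "osp_key n (Unb i) = 2 * i"
| "osp_key n (Bar i) = 2 * i + 1"
| "osp_key n (Pr j) = 2 * n + 1 + j"

fun is_primed :: "ospent \<Rightarrow> bool" where
  "is_primed (Pr j) = True"
| "is_primed _ = False"

fun sym_index :: "ospent \<Rightarrow> nat" where
  "sym_index (Unb i) = i"
| "sym_index (Bar i) = i"
| "sym_index (Pr j) = 0"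

definition osp_entries :: "nat \<Rightarrow> nat \<Rightarrow> ospent set" where
  "osp_entries n m = Unb ` {1..n} \<union> Bar ` {1..n} \<union> Pr ` {1..m}"

text \<open>A partition with at most n parts is given as a weakly decreasing list of length n
  (padded with zeros).  Cells are (row, column), 0-indexed.\<close>

definition diagram :: "nat list \<Rightarrow> (nat \<times> nat) set" where
  "diagram lam = {(r, c). r < length lam \<and> c < lam ! r}"

text \<open>Primed entries: strictly
  increasing in rows, weakly down columns; unprimed entries precede primed ones (so the
  unprimed entries occupy a Young subdiagram and the primed ones a skew shape).\<close>

definition is_osp_tableau :: "nat \<Rightarrow> nat \<Rightarrow> nat list \<Rightarrow> (nat \<times> nat \<Rightarrow> ospent) \<Rightarrow> bool" where
  "is_osp_tableau n m lam T \<longleftrightarrow>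
     T \<in> (diagram lam \<rightarrow>\<^sub>E osp_entries n m) \<and>
     (\<forall>r c. (r, c) \<in> diagram lam \<and> (r, Suc c) \<in> diagram lam \<longrightarrow>
        osp_key n (T (r, c)) \<le> osp_key n (T (r, Suc c)) \<and>
        (is_primed (T (r, c)) \<and> is_primed (T (r, Suc c)) \<longrightarrow>
           osp_key n (T (r, c)) < osp_key n (T (r, Suc c)))) \<and>
     (\<forall>r c. (r, c) \<in> diagram lam \<and> (Suc r, c) \<in> diagram lam \<longrightarrow>
        osp_key n (T (r, c)) \<le> osp_key n (T (Suc r, c)) \<and>
        (\<not> is_primed (T (r, c)) \<and> \<not> is_primed (T (Suc r, c)) \<longrightarrow>
           osp_key n (T (r, c)) < osp_key n (T (Suc r, c)))) \<and>
     (\<forall>r c. (r, c) \<in> diagram lam \<and> \<not> is_primed (T (r, c)) \<longrightarrow> Suc r \<le> sym_index (T (r, c)))"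

definition osp_count :: "nat list \<Rightarrow> (nat \<times> nat \<Rightarrow> ospent) \<Rightarrow> ospent \<Rightarrow> nat" where
  "osp_count lam T e = card {p \<in> diagram lam. T p = e}"

definition osp_weight ::
  "nat \<Rightarrow> nat \<Rightarrow> nat list \<Rightarrow> (nat \<Rightarrow> 'a::field) \<Rightarrow> (nat \<Rightarrow> 'a) \<Rightarrow> (nat \<times> nat \<Rightarrow> ospent) \<Rightarrow> 'a" where
  "osp_weight n m lam x y T =
     (\<Prod>i\<in>{1..n}. x i ^ osp_count lam T (Unb i) * inverse (x i) ^ osp_count lam T (Bar i)) *
     (\<Prod>j\<in>{1..m}. y j ^ osp_count lam T (Pr j))"

text \<open>spo_lambda(x_1..x_n; y_1..y_m), variables indexed from 1.\<close>
definition spo :: "nat \<Rightarrow> nat \<Rightarrow> nat list \<Rightarrow> (nat \<Rightarrow> 'a::field) \<Rightarrow> (nat \<Rightarrow> 'a) \<Rightarrow> 'a" where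
  "spo n m lam x y = (\<Sum>T\<in>{T. is_osp_tableau n m lam T}. osp_weight n m lam x y T)"

end

theory Submission
  imports Defs
begin



lemma det_mat_leibniz:
  "det (mat n n f) = (\<Sum>p | p permutes {0..<n}. signof p * (\<Prod>i = 0..<n. f (i, p i)))"
proof -
  have "mat n n f \<in> carrier_mat n n" by simp
  from det_def'[OF this] show ?thesis
    by (auto intro!: sum.cong prod.cong simp: permutes_in_image)
qed

lemma det_rows_scale:
  "det (mat n n (\<lambda>(i,j). a i * M i j)) = (\<Prod>i<n. a i) * det (mat n n (\<lambda>(i,j). M i j))"
proof -
  have "det (mat n n (\<lambda>(i,j). a i * M i j)) =
     (\<Sum>p | p permutes {0..<n}. signof p * (\<Prod>i = 0..<n. a i * M i (p i)))"
    by (simp add: det_mat_leibniz)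
  also have "\<dots> = (\<Sum>p | p permutes {0..<n}. (\<Prod>i<n. a i) * (signof p * (\<Prod>i = 0..<n. M i (p i))))"
    by (intro sum.cong refl) (simp add: prod.distrib atLeast0LessThan mult_ac)
  also have "\<dots> = (\<Prod>i<n. a i) * det (mat n n (\<lambda>(i,j). M i j))"
    by (simp add: det_mat_leibniz sum_distrib_left)
  finally show ?thesis .
qed

lemma det_cols_sum:
  fixes g :: "nat \<Rightarrow> nat \<Rightarrow> 'b \<Rightarrow> 'a::comm_ring_1"
  assumes fin: "\<And>j. j < n \<Longrightarrow> finite (K j)"
  shows "det (mat n n (\<lambda>(i,j). \<Sum>k\<in>K j. g i j k)) =
         (\<Sum>c\<in>PiE {0..<n} K. det (mat n n (\<lambda>(i,j). g i j (c j))))"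
proof -
  let ?P = "{p. p permutes {0..<n}}"
  have "det (mat n n (\<lambda>(i,j). \<Sum>k\<in>K j. g i j k)) =
     (\<Sum>p\<in>?P. signof p * (\<Prod>i = 0..<n. \<Sum>k\<in>K (p i). g i (p i) k))"
    by (simp add: det_mat_leibniz)
  also have "\<dots> = (\<Sum>p\<in>?P. signof p * (\<Sum>d\<in>PiE {0..<n} (\<lambda>i. K (p i)). \<Prod>i = 0..<n. g i (p i) (d i)))"
  proof (intro sum.cong refl arg_cong2[where f="(*)"])
    fix p assume p: "p \<in> ?P"
    show "(\<Prod>i = 0..<n. \<Sum>k\<in>K (p i). g i (p i) k) = (\<Sum>d\<in>PiE {0..<n} (\<lambda>i. K (p i)). \<Prod>i = 0..<n. g i (p i) (d i))"
      by (rule prod_sum_PiE) (use p fin permutes_in_image in fastforce)+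
  qed
  also have "\<dots> = (\<Sum>p\<in>?P. signof p * (\<Sum>c\<in>PiE {0..<n} K. \<Prod>i = 0..<n. g i (p i) (c (p i))))"
  proof (rule sum.cong[OF refl], rule arg_cong2[where f="(*)"], rule refl)
    fix p assume p: "p \<in> ?P"
    hence pp: "p permutes {0..<n}" by simp
    show "(\<Sum>d\<in>PiE {0..<n} (\<lambda>i. K (p i)). \<Prod>i = 0..<n. g i (p i) (d i)) =
          (\<Sum>c\<in>PiE {0..<n} K. \<Prod>i = 0..<n. g i (p i) (c (p i)))"
    proof (rule sum.reindex_bij_witness[where j="\<lambda>d. restrict (d \<circ> inv_into UNIV p) {0..<n}"
                                       and i="\<lambda>c. restrict (c \<circ> p) {0..<n}"])
      fix c assume c: "c \<in> PiE {0..<n} K"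
      show "restrict (restrict (c \<circ> p) {0..<n} \<circ> inv_into UNIV p) {0..<n} = c"
      proof
        fix j show "restrict (restrict (c \<circ> p) {0..<n} \<circ> inv_into UNIV p) {0..<n} j = c j"
          using c pp permutes_inverses(1)[OF pp] permutes_in_image[OF permutes_inv[OF pp]]
          by (auto simp: PiE_def extensional_def)
      qed
      show "restrict (c \<circ> p) {0..<n} \<in> PiE {0..<n} (\<lambda>i. K (p i))"
        using c pp permutes_in_image[OF pp] by auto
    next
      fix d assume d: "d \<in> PiE {0..<n} (\<lambda>i. K (p i))"
      show "restrict (restrict (d \<circ> inv_into UNIV p) {0..<n} \<circ> p) {0..<n} = d"
      proof
        fix j show "restrict (restrict (d \<circ> inv_into UNIV p) {0..<n} \<circ> p) {0..<n} j = d j"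
          using d pp permutes_inverses(2)[OF pp] permutes_in_image[OF pp]
          by (auto simp: PiE_def extensional_def)
      qed
      show "restrict (d \<circ> inv_into UNIV p) {0..<n} \<in> PiE {0..<n} K"
      proof -
        { fix j assume j: "j \<in> {0..<n}"
          have "inv_into UNIV p j \<in> {0..<n}" using permutes_in_image[OF permutes_inv[OF pp]] j by auto
          hence "d (inv_into UNIV p j) \<in> K (p (inv_into UNIV p j))" using d by auto
          hence "d (inv_into UNIV p j) \<in> K j" using permutes_inverses(1)[OF pp] by simp }
        thus ?thesis by auto
      qed
      show "(\<Prod>i = 0..<n. g i (p i) (restrict (d \<circ> inv_into UNIV p) {0..<n} (p i))) =
            (\<Prod>i = 0..<n. g i (p i) (d i))"
        using pp permutes_inverses(2)[OF pp] permutes_in_image[OF pp]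
        by (intro prod.cong refl) auto
    qed
  qed
  also have "\<dots> = (\<Sum>c\<in>PiE {0..<n} K. \<Sum>p\<in>?P. signof p * (\<Prod>i = 0..<n. g i (p i) (c (p i))))"
    by (simp add: sum_distrib_left sum.swap[of _ ?P])
  also have "\<dots> = (\<Sum>c\<in>PiE {0..<n} K. det (mat n n (\<lambda>(i,j). g i j (c j))))"
    by (simp add: det_mat_leibniz)
  finally show ?thesis .
qed

lemma det_colop:
  fixes M :: "nat \<Rightarrow> nat \<Rightarrow> 'a::comm_ring_1"
  shows "det (mat n n (\<lambda>(i,j). M i j - (if Suc j < n then c j * M i (Suc j) else 0))) =
         det (mat n n (\<lambda>(i,j). M i j))"
proof -
  let ?U = "mat n n (\<lambda>(k,j). if k = j then 1 else if k = Suc j then - c j else (0::'a))"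
  have U: "?U \<in> carrier_mat n n" by simp
  have dU: "det ?U = 1"
  proof -
    have "det ?U = prod_list (diag_mat ?U)"
      by (rule det_lower_triangular[of n]) auto
    also have "diag_mat ?U = map (\<lambda>_. 1) [0..<n]"
      by (auto simp: diag_mat_def)
    also have "prod_list (map (\<lambda>_. (1::'a)) [0..<n]) = 1"
      by (induct n) auto
    finally show ?thesis .
  qed
  have eq: "mat n n (\<lambda>(i,j). M i j - (if Suc j < n then c j * M i (Suc j) else 0)) =
        mat n n (\<lambda>(i,j). M i j) * ?U"
  proof (rule eq_matI)
    fix i j assume i: "i < dim_row (mat n n (\<lambda>(i,j). M i j) * ?U)" and j: "j < dim_col (mat n n (\<lambda>(i,j). M i j) * ?U)"
    hence i: "i < n" and j: "j < n" by auto
    have "(mat n n (\<lambda>(i,j). M i j) * ?U) $$ (i,j) = (\<Sum>k = 0..<n. M i k * ?U $$ (k, j))"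
      using i j by (simp add: scalar_prod_def)
    also have "\<dots> = (\<Sum>k = 0..<n. (if k = j then M i j else 0) + (if k = Suc j then - c j * M i (Suc j) else 0))"
      using j by (intro sum.cong refl) auto
    also have "\<dots> = M i j - (if Suc j < n then c j * M i (Suc j) else 0)"
      using j by (simp add: sum.distrib)
    finally show "mat n n (\<lambda>(i,j). M i j - (if Suc j < n then c j * M i (Suc j) else 0)) $$ (i,j) =
        (mat n n (\<lambda>(i,j). M i j) * ?U) $$ (i,j)" using i j by simp
  qed auto
  show ?thesis unfolding eq by (subst det_mult[OF _ U]) (auto simp: dU)
qed

lemma det_lastrow:
  fixes P :: "nat \<Rightarrow> nat \<Rightarrow> 'a::comm_ring_1"
  assumes e1: "e m = 1" and ec: "\<And>j. j < m \<Longrightarrow> e j = c j * e (Suc j)"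
  shows "det (mat (Suc m) (Suc m) (\<lambda>(i,j). if i < m then P i j else e j)) =
         det (mat m m (\<lambda>(i,j). P i j - c j * P i (Suc j)))"
proof -
  let ?M = "\<lambda>i j. if i < m then P i j else e j"
  let ?N = "mat (Suc m) (Suc m) (\<lambda>(i,j). ?M i j - (if Suc j < Suc m then c j * ?M i (Suc j) else 0))"
  have "det (mat (Suc m) (Suc m) (\<lambda>(i,j). ?M i j)) = det ?N"
    by (rule det_colop[symmetric])
  also have "det ?N = (\<Sum>j<Suc m. ?N $$ (m,j) * cofactor ?N m j)"
    by (rule laplace_expansion_row) auto
  also have "\<dots> = (\<Sum>j<Suc m. (if j = m then cofactor ?N m m else 0))"
    by (intro sum.cong refl) (auto simp: ec e1)
  also have "\<dots> = cofactor ?N m m" by simp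
  also have "\<dots> = det (mat_delete ?N m m)" by (simp add: cofactor_def)
  also have "mat_delete ?N m m = mat m m (\<lambda>(i,j). P i j - c j * P i (Suc j))"
    by (rule eq_matI) (auto simp: mat_delete_def)
  finally show ?thesis by simp
qed




definition Fp :: "nat \<Rightarrow> 'a::field \<Rightarrow> 'a" where "Fp k u = u ^ k - inverse u ^ k"
definition tt :: "'a::field \<Rightarrow> 'a" where "tt u = u + inverse u"
definition HS :: "nat \<Rightarrow> nat \<Rightarrow> (nat \<Rightarrow> nat) \<Rightarrow> (nat \<Rightarrow> nat) set" where
  "HS K n s = {\<mu>. (\<forall>r<n. s (Suc r) \<le> \<mu> r \<and> \<mu> r \<le> s r \<and> (K \<le> 2*r \<longrightarrow> \<mu> r = 0)) \<and> (\<forall>r. n \<le> r \<longrightarrow> \<mu> r = 0)}"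
definition Adet :: "(nat \<Rightarrow> 'a::field) \<Rightarrow> nat \<Rightarrow> (nat \<Rightarrow> nat) \<Rightarrow> 'a" where
  "Adet X n s = det (mat n n (\<lambda>(i,j). Fp (s j + n - j) (X i)))"

lemma Fp0[simp]: "Fp 0 u = 0" by (simp add: Fp_def)

lemma Fp_rec: assumes "(u::'a::field) \<noteq> 0"
  shows "tt u * Fp (Suc k) u = Fp (Suc (Suc k)) u + Fp k u"
proof -
  have i: "u * inverse u = 1" using assms by simp
  have "tt u * Fp (Suc k) u = u*u*u^k - (u * inverse u) * inverse u ^ k + (inverse u * u) * u^k
        - inverse u * inverse u * inverse u ^ k"
    by (simp add: tt_def Fp_def algebra_simps)
  also have "\<dots> = Fp (Suc (Suc k)) u + Fp k u"
    using i by (simp add: Fp_def algebra_simps)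
  finally show ?thesis .
qed

lemma tel:
  fixes \<phi> :: "nat \<Rightarrow> 'a::comm_ring_1"
  shows "(\<Sum>a<Suc d. w^(d-a) * (\<phi> (Suc (e+a)) - w * \<phi> (e+a))) = \<phi> (Suc (e+d)) - w^(Suc d) * \<phi> e"
proof (induct d)
  case 0 then show ?case by simp
next
  case (Suc d)
  have "(\<Sum>a<Suc (Suc d). w^(Suc d-a) * (\<phi> (Suc (e+a)) - w * \<phi> (e+a))) =
        w * (\<Sum>a<Suc d. w^(d-a) * (\<phi> (Suc (e+a)) - w * \<phi> (e+a))) + (\<phi> (Suc (e+Suc d)) - w * \<phi> (e+Suc d))"
    by (simp add: sum_distrib_left Suc_diff_le distrib_left mult_ac)
  also have "\<dots> = \<phi> (Suc (e+Suc d)) - w^(Suc (Suc d)) * \<phi> e"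
    unfolding Suc by (simp add: algebra_simps)
  finally show ?case .
qed

lemma telG:
  fixes u z :: "'a::field"
  assumes u: "u \<noteq> 0" and z: "z \<noteq> 0"
  shows "(tt u - tt z) * (\<Sum>a<Suc d. z^(d-a) * Fp (Suc (b+a)) u) =
     (Fp (Suc (Suc (b+d))) u - inverse z * Fp (Suc (b+d)) u) - z^(Suc d) * (Fp (Suc b) u - inverse z * Fp b u)"
proof (induct d)
  case 0
  have "tt u * Fp (Suc b) u = Fp (Suc (Suc b)) u + Fp b u" by (rule Fp_rec[OF u])
  moreover have "tt z * Fp (Suc b) u = z * Fp (Suc b) u + inverse z * Fp (Suc b) u" by (simp add: tt_def algebra_simps)
  ultimately show ?case using z by (simp add: algebra_simps numeral_2_eq_2)
next
  case (Suc d)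
  have eqR: "(tt u - tt z) * Fp (Suc (b + Suc d)) u = Fp (Suc (Suc (b + Suc d))) u + Fp (b + Suc d) u - z * Fp (Suc (b + Suc d)) u - inverse z * Fp (Suc (b + Suc d)) u"
  proof -
    have "tt u * Fp (Suc (b + Suc d)) u = Fp (Suc (Suc (b + Suc d))) u + Fp (b + Suc d) u" by (rule Fp_rec[OF u])
    thus ?thesis by (simp add: tt_def algebra_simps)
  qed
  have "(\<Sum>a<Suc (Suc d). z^(Suc d-a) * Fp (Suc (b+a)) u) =
        z * (\<Sum>a<Suc d. z^(d-a) * Fp (Suc (b+a)) u) + Fp (Suc (b + Suc d)) u"
    by (simp add: sum_distrib_left Suc_diff_le distrib_left mult_ac)
  hence "(tt u - tt z) * (\<Sum>a<Suc (Suc d). z^(Suc d-a) * Fp (Suc (b+a)) u) =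
      z * ((tt u - tt z) * (\<Sum>a<Suc d. z^(d-a) * Fp (Suc (b+a)) u)) + (tt u - tt z) * Fp (Suc (b + Suc d)) u"
    by (simp add: algebra_simps)
  also have "\<dots> = z * ((Fp (Suc (Suc (b+d))) u - inverse z * Fp (Suc (b+d)) u) - z^(Suc d) * (Fp (Suc b) u - inverse z * Fp b u))
       + (tt u - tt z) * Fp (Suc (b + Suc d)) u"
    by (simp only: Suc)
  also have "\<dots> = z * ((Fp (Suc (Suc (b+d))) u - inverse z * Fp (Suc (b+d)) u) - z^(Suc d) * (Fp (Suc b) u - inverse z * Fp b u))
       + (Fp (Suc (Suc (b + Suc d))) u + Fp (b + Suc d) u - z * Fp (Suc (b + Suc d)) u - inverse z * Fp (Suc (b + Suc d)) u)"
    by (simp only: eqR)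
  also have "\<dots> = (Fp (Suc (Suc (b+Suc d))) u - inverse z * Fp (Suc (b+Suc d)) u) - z^(Suc (Suc d)) * (Fp (Suc b) u - inverse z * Fp b u)"
    using z by (simp add: algebra_simps numeral_2_eq_2)
  finally show ?case .
qed

lemma transpose_mat_mat: "transpose_mat (mat n n (\<lambda>(i,j). M i j)) = mat n n (\<lambda>(i,j). M j i)"
  by (rule eq_matI) auto

lemma det_cols_scale:
  "det (mat n n (\<lambda>(i,j). b j * M i j)) = (\<Prod>j<n. b j) * det (mat n n (\<lambda>(i,j). M i j))"
proof -
  have "det (mat n n (\<lambda>(i,j). b j * M i j)) = det (transpose_mat (mat n n (\<lambda>(i,j). b j * M i j)))"
    by (metis det_transpose mat_carrier)
  also have "\<dots> = det (mat n n (\<lambda>(i,j). b i * M j i))" by (simp add: transpose_mat_mat)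
  also have "\<dots> = (\<Prod>j<n. b j) * det (mat n n (\<lambda>(i,j). M j i))" by (rule det_rows_scale)
  also have "det (mat n n (\<lambda>(i,j). M j i)) = det (transpose_mat (mat n n (\<lambda>(i,j). M i j)))"
    by (simp add: transpose_mat_mat)
  also have "\<dots> = det (mat n n (\<lambda>(i,j). M i j))" by (metis det_transpose mat_carrier)
  finally show ?thesis .
qed

lemma det_mat_cong:
  assumes "\<And>i j. i < n \<Longrightarrow> j < n \<Longrightarrow> f (i,j) = g (i,j)"
  shows "det (mat n n f) = det (mat n n g)"
proof -
  have "mat n n f = mat n n g" by (rule eq_matI) (use assms in auto)
  thus ?thesis by simp
qed




lemma Adet_cong: "(\<And>j. j < n \<Longrightarrow> s j = s' j) \<Longrightarrow> Adet X n s = Adet X n s'"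
  unfolding Adet_def by (rule det_mat_cong) auto

lemma stepA:
  fixes X :: "nat \<Rightarrow> 'a::field" and z :: 'a
  assumes nu: "\<nu> (Suc m) = 0"
  shows "(\<Sum>\<mu>\<in>HS (2*m) (Suc m) \<nu>. (\<Prod>r<Suc m. z^(\<nu> r - \<mu> r)) * Adet X m \<mu>) =
    z^(\<nu> m) * det (mat m m (\<lambda>(i,j). \<Sum>a\<in>{\<nu> (Suc j)..\<nu> j}. z^(\<nu> j - a) * Fp (a + m - j) (X i)))"
proof -
  let ?K = "\<lambda>j. {\<nu> (Suc j)..\<nu> j}"
  have "det (mat m m (\<lambda>(i,j). \<Sum>a\<in>?K j. z^(\<nu> j - a) * Fp (a + m - j) (X i))) =
     (\<Sum>c\<in>PiE {0..<m} ?K. det (mat m m (\<lambda>(i,j). z^(\<nu> j - c j) * Fp (c j + m - j) (X i))))"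
    by (rule det_cols_sum) simp
  also have "\<dots> = (\<Sum>c\<in>PiE {0..<m} ?K. (\<Prod>j<m. z^(\<nu> j - c j)) * Adet X m c)"
    unfolding Adet_def by (intro sum.cong refl det_cols_scale)
  finally have R: "z^(\<nu> m) * det (mat m m (\<lambda>(i,j). \<Sum>a\<in>?K j. z^(\<nu> j - a) * Fp (a + m - j) (X i))) =
      (\<Sum>c\<in>PiE {0..<m} ?K. z^(\<nu> m) * ((\<Prod>j<m. z^(\<nu> j - c j)) * Adet X m c))"
    by (simp add: sum_distrib_left)
  have L: "(\<Sum>\<mu>\<in>HS (2*m) (Suc m) \<nu>. (\<Prod>r<Suc m. z^(\<nu> r - \<mu> r)) * Adet X m \<mu>) =
      (\<Sum>c\<in>PiE {0..<m} ?K. z^(\<nu> m) * ((\<Prod>j<m. z^(\<nu> j - c j)) * Adet X m c))"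
  proof (rule sum.reindex_bij_witness[where j="\<lambda>\<mu>. restrict \<mu> {0..<m}" and i="\<lambda>c r. if r < m then c r else 0"])
    fix \<mu> assume mu: "\<mu> \<in> HS (2*m) (Suc m) \<nu>"
    hence m0: "\<mu> m = 0" and mr: "\<And>r. r > m \<Longrightarrow> \<mu> r = 0" by (auto simp: HS_def)
    show "(\<lambda>r. if r < m then restrict \<mu> {0..<m} r else 0) = \<mu>"
    proof
      fix r show "(if r < m then restrict \<mu> {0..<m} r else 0) = \<mu> r"
        using m0 mr[of r] by (cases "r < m"; cases "r = m") auto
    qed
    show "restrict \<mu> {0..<m} \<in> PiE {0..<m} ?K" using mu by (auto simp: HS_def)
    show "z^(\<nu> m) * ((\<Prod>j<m. z^(\<nu> j - restrict \<mu> {0..<m} j)) * Adet X m (restrict \<mu> {0..<m})) =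
        (\<Prod>r<Suc m. z^(\<nu> r - \<mu> r)) * Adet X m \<mu>"
    proof -
      have "Adet X m (restrict \<mu> {0..<m}) = Adet X m \<mu>" by (rule Adet_cong) auto
      moreover have "(\<Prod>j<m. z^(\<nu> j - restrict \<mu> {0..<m} j)) = (\<Prod>j<m. z^(\<nu> j - \<mu> j))"
        by (intro prod.cong) auto
      ultimately show ?thesis using m0 by (simp add: mult_ac)
    qed
  next
    fix c assume c: "c \<in> PiE {0..<m} ?K"
    show "restrict (\<lambda>r. if r < m then c r else 0) {0..<m} = c"
    proof
      fix r show "restrict (\<lambda>r. if r < m then c r else 0) {0..<m} r = c r"
        using c by (auto simp: PiE_def extensional_def)
    qed
    show "(\<lambda>r. if r < m then c r else 0) \<in> HS (2*m) (Suc m) \<nu>"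
      using c nu by (auto simp: HS_def less_Suc_eq)
  qed
  show ?thesis using L R by simp
qed




definition Pf :: "'a::field \<Rightarrow> (nat \<Rightarrow> nat) \<Rightarrow> nat \<Rightarrow> nat \<Rightarrow> 'a \<Rightarrow> 'a" where
  "Pf z \<nu> m j u = Fp (\<nu> j + Suc m - j) u - inverse z * Fp (\<nu> j + m - j) u"

lemma sum_ivl_shift: "(\<Sum>a\<in>{p..p+d}. f a) = (\<Sum>a<Suc d. f (p + a))"
proof -
  have "(\<Sum>a\<in>{p..p+d}. f a) = (\<Sum>a\<in>{0+p..d+p}. f a)" by (simp add: add.commute)
  also have "\<dots> = (\<Sum>a\<in>{0..d}. f (a + p))" by (rule sum.shift_bounds_cl_nat_ivl)
  also have "\<dots> = (\<Sum>a<Suc d. f (p + a))" by (simp add: atLeast0AtMost lessThan_Suc_atMost add.commute)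
  finally show ?thesis .
qed

lemma entryB:
  fixes u z :: "'a::field"
  assumes u: "u \<noteq> 0" and z: "z \<noteq> 0" and j: "j < m" and pq: "p \<le> q"
  shows "(tt u - tt z) * (\<Sum>a\<in>{p..q}. z^(q - a) * Fp (a + m - j) u) =
    (Fp (q + Suc m - j) u - inverse z * Fp (q + m - j) u)
    - z^(q - p + 1) * (Fp (p + Suc m - Suc j) u - inverse z * Fp (p + m - Suc j) u)"
proof -
  define d where "d = q - p"
  define b where "b = p + m - j - 1"
  have q: "q = p + d" using pq d_def by simp
  have "(\<Sum>a\<in>{p..q}. z^(q - a) * Fp (a + m - j) u) = (\<Sum>a<Suc d. z^(d - a) * Fp (Suc (b + a)) u)"
    unfolding q sum_ivl_shift
    by (intro sum.cong refl) (use j in \<open>auto simp: b_def intro!: arg_cong2[where f=Fp]\<close>)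
  hence "(tt u - tt z) * (\<Sum>a\<in>{p..q}. z^(q - a) * Fp (a + m - j) u) =
     (Fp (Suc (Suc (b+d))) u - inverse z * Fp (Suc (b+d)) u) - z^(Suc d) * (Fp (Suc b) u - inverse z * Fp b u)"
    using telG[OF u z, of d b] by simp
  also have "Suc (Suc (b+d)) = q + Suc m - j" using j q by (simp add: b_def)
  also have "Suc (b+d) = q + m - j" using j q by (simp add: b_def)
  also have "Suc b = p + Suc m - Suc j" using j by (simp add: b_def)
  also have "b = p + m - Suc j" using j by (simp add: b_def)
  also have "Suc d = q - p + 1" by (simp add: d_def)
  finally show ?thesis .
qed

lemma stepB:
  fixes X :: "nat \<Rightarrow> 'a::field" and z :: 'a
  assumes X: "\<And>i. i < m \<Longrightarrow> X i \<noteq> 0" and z: "z \<noteq> 0" and mono: "\<And>j. j < m \<Longrightarrow> \<nu> (Suc j) \<le> \<nu> j"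
  shows "(\<Prod>i<m. tt (X i) - tt z) * det (mat m m (\<lambda>(i,j). \<Sum>a\<in>{\<nu> (Suc j)..\<nu> j}. z^(\<nu> j - a) * Fp (a + m - j) (X i)))
    = det (mat m m (\<lambda>(i,j). Pf z \<nu> m j (X i) - z^(\<nu> j - \<nu> (Suc j) + 1) * Pf z \<nu> m (Suc j) (X i)))"
proof -
  have "(\<Prod>i<m. tt (X i) - tt z) * det (mat m m (\<lambda>(i,j). \<Sum>a\<in>{\<nu> (Suc j)..\<nu> j}. z^(\<nu> j - a) * Fp (a + m - j) (X i)))
     = det (mat m m (\<lambda>(i,j). (tt (X i) - tt z) * (\<Sum>a\<in>{\<nu> (Suc j)..\<nu> j}. z^(\<nu> j - a) * Fp (a + m - j) (X i))))"
    by (rule det_rows_scale[symmetric])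
  also have "\<dots> = det (mat m m (\<lambda>(i,j). Pf z \<nu> m j (X i) - z^(\<nu> j - \<nu> (Suc j) + 1) * Pf z \<nu> m (Suc j) (X i)))"
  proof (rule det_mat_cong)
    fix i j assume i: "i < m" and j: "j < m"
    show "(\<lambda>(i,j). (tt (X i) - tt z) * (\<Sum>a\<in>{\<nu> (Suc j)..\<nu> j}. z^(\<nu> j - a) * Fp (a + m - j) (X i))) (i,j) =
      (\<lambda>(i,j). Pf z \<nu> m j (X i) - z^(\<nu> j - \<nu> (Suc j) + 1) * Pf z \<nu> m (Suc j) (X i)) (i,j)"
      by (simp only: case_prod_conv Pf_def) (rule entryB[OF X[OF i] z j mono[OF j]])
  qed
  finally show ?thesis .
qed

lemma stepC:
  fixes X :: "nat \<Rightarrow> 'a::field" and z :: 'a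
  assumes z: "z \<noteq> 0" and mono: "\<And>j. j < m \<Longrightarrow> \<nu> (Suc j) \<le> \<nu> j"
  shows "z^(\<nu> m) * det (mat m m (\<lambda>(i,j). Pf z \<nu> m j (X i) - z^(\<nu> j - \<nu> (Suc j) + 1) * Pf z \<nu> m (Suc j) (X i)))
    = det (mat (Suc m) (Suc m) (\<lambda>(i,j). if i < m then Pf z \<nu> m j (X i) else z^(\<nu> j + m - j)))"
proof -
  let ?e = "\<lambda>j. z^(\<nu> j + m - j) * inverse z ^ (\<nu> m)"
  have e1: "?e m = 1" using z by (simp add: power_inverse)
  have ec: "?e j = z^(\<nu> j - \<nu> (Suc j) + 1) * ?e (Suc j)" if j: "j < m" for j
  proof -
    have "\<nu> j + m - j = (\<nu> j - \<nu> (Suc j) + 1) + (\<nu> (Suc j) + m - Suc j)" using j mono[OF j] by simp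
    hence "z^(\<nu> j + m - j) = z^(\<nu> j - \<nu> (Suc j) + 1) * z^(\<nu> (Suc j) + m - Suc j)" by (metis power_add)
    thus ?thesis by (simp add: mult_ac)
  qed
  have "det (mat (Suc m) (Suc m) (\<lambda>(i,j). if i < m then Pf z \<nu> m j (X i) else ?e j)) =
     det (mat m m (\<lambda>(i,j). Pf z \<nu> m j (X i) - z^(\<nu> j - \<nu> (Suc j) + 1) * Pf z \<nu> m (Suc j) (X i)))"
    by (rule det_lastrow[of ?e, OF e1 ec])
  moreover have "det (mat (Suc m) (Suc m) (\<lambda>(i,j). if i < m then Pf z \<nu> m j (X i) else z^(\<nu> j + m - j))) =
      z^(\<nu> m) * det (mat (Suc m) (Suc m) (\<lambda>(i,j). if i < m then Pf z \<nu> m j (X i) else ?e j))"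
  proof -
    have "det (mat (Suc m) (Suc m) (\<lambda>(i,j). (if i < m then 1 else z^(\<nu> m)) * (if i < m then Pf z \<nu> m j (X i) else ?e j)))
       = (\<Prod>i<Suc m. if i < m then 1 else z^(\<nu> m)) * det (mat (Suc m) (Suc m) (\<lambda>(i,j). if i < m then Pf z \<nu> m j (X i) else ?e j))"
      by (rule det_rows_scale)
    moreover have "(\<Prod>i<Suc m. if i < m then 1 else z^(\<nu> m)) = z^(\<nu> m)" by simp
    moreover have "det (mat (Suc m) (Suc m) (\<lambda>(i,j). (if i < m then 1 else z^(\<nu> m)) * (if i < m then Pf z \<nu> m j (X i) else ?e j)))
      = det (mat (Suc m) (Suc m) (\<lambda>(i,j). if i < m then Pf z \<nu> m j (X i) else z^(\<nu> j + m - j)))"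
      by (rule det_mat_cong) (use z in \<open>auto simp: power_inverse field_simps\<close>)
    ultimately show ?thesis by simp
  qed
  ultimately show ?thesis by simp
qed




definition Qv :: "(nat \<Rightarrow> 'a::field) \<Rightarrow> 'a \<Rightarrow> nat \<Rightarrow> nat \<Rightarrow> nat \<Rightarrow> nat \<Rightarrow> 'a" where
  "Qv X z m b i j = (if i < m then Fp (b + Suc m - j) (X i) - inverse z * Fp (b + m - j) (X i) else z^(b + m - j))"

lemma Qv_eq: "(\<lambda>(i,j). if i < m then Pf z \<nu> m j (X i) else z^(\<nu> j + m - j)) = (\<lambda>(i,j). Qv X z m (\<nu> j) i j)"
  by (auto simp: Qv_def Pf_def fun_eq_iff)

lemma stepE:
  fixes X :: "nat \<Rightarrow> 'a::field" and z :: 'a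
  shows "(z - inverse z) * (\<Sum>\<nu>\<in>HS (2*m+1) (Suc m) s. (\<Prod>r<Suc m. inverse z^(s r - \<nu> r)) *
            det (mat (Suc m) (Suc m) (\<lambda>(i,j). Qv X z m (\<nu> j) i j)))
    = det (mat (Suc m) (Suc m) (\<lambda>(i,j). \<Sum>b\<in>{s (Suc j)..s j}. inverse z^(s j - b) * ((if i < m then 1 else z - inverse z) * Qv X z m b i j)))"
proof -
  let ?K = "\<lambda>j. {s (Suc j)..s j}"
  let ?a = "\<lambda>i. if i < m then 1 else z - inverse z"
  have "det (mat (Suc m) (Suc m) (\<lambda>(i,j). \<Sum>b\<in>?K j. inverse z^(s j - b) * (?a i * Qv X z m b i j)))
      = (\<Sum>c\<in>PiE {0..<Suc m} ?K. det (mat (Suc m) (Suc m) (\<lambda>(i,j). inverse z^(s j - c j) * (?a i * Qv X z m (c j) i j))))"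
    by (rule det_cols_sum) simp
  also have "\<dots> = (\<Sum>c\<in>PiE {0..<Suc m} ?K. (z - inverse z) * ((\<Prod>j<Suc m. inverse z^(s j - c j)) * det (mat (Suc m) (Suc m) (\<lambda>(i,j). Qv X z m (c j) i j))))"
  proof (intro sum.cong refl)
    fix c
    have "det (mat (Suc m) (Suc m) (\<lambda>(i,j). inverse z^(s j - c j) * (?a i * Qv X z m (c j) i j)))
       = (\<Prod>j<Suc m. inverse z^(s j - c j)) * det (mat (Suc m) (Suc m) (\<lambda>(i,j). ?a i * Qv X z m (c j) i j))"
      by (rule det_cols_scale)
    also have "det (mat (Suc m) (Suc m) (\<lambda>(i,j). ?a i * Qv X z m (c j) i j)) =
        (\<Prod>i<Suc m. ?a i) * det (mat (Suc m) (Suc m) (\<lambda>(i,j). Qv X z m (c j) i j))"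
      by (rule det_rows_scale)
    also have "(\<Prod>i<Suc m. ?a i) = z - inverse z" by simp
    finally show "det (mat (Suc m) (Suc m) (\<lambda>(i,j). inverse z^(s j - c j) * (?a i * Qv X z m (c j) i j))) =
       (z - inverse z) * ((\<Prod>j<Suc m. inverse z^(s j - c j)) * det (mat (Suc m) (Suc m) (\<lambda>(i,j). Qv X z m (c j) i j)))"
      by (simp add: mult_ac)
  qed
  also have "\<dots> = (z - inverse z) * (\<Sum>c\<in>PiE {0..<Suc m} ?K. (\<Prod>j<Suc m. inverse z^(s j - c j)) * det (mat (Suc m) (Suc m) (\<lambda>(i,j). Qv X z m (c j) i j)))"
    by (simp add: sum_distrib_left)
  also have "(\<Sum>c\<in>PiE {0..<Suc m} ?K. (\<Prod>j<Suc m. inverse z^(s j - c j)) * det (mat (Suc m) (Suc m) (\<lambda>(i,j). Qv X z m (c j) i j)))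
     = (\<Sum>\<nu>\<in>HS (2*m+1) (Suc m) s. (\<Prod>r<Suc m. inverse z^(s r - \<nu> r)) * det (mat (Suc m) (Suc m) (\<lambda>(i,j). Qv X z m (\<nu> j) i j)))"
  proof (rule sum.reindex_bij_witness[where i="\<lambda>\<nu>. restrict \<nu> {0..<Suc m}" and j="\<lambda>c r. if r < Suc m then c r else 0"])
    fix c assume c: "c \<in> PiE {0..<Suc m} ?K"
    show "restrict (\<lambda>r. if r < Suc m then c r else 0) {0..<Suc m} = c"
      using c by (auto simp: PiE_def extensional_def fun_eq_iff)
    show "(\<lambda>r. if r < Suc m then c r else 0) \<in> HS (2*m+1) (Suc m) s"
      using c by (auto simp: HS_def)
    show "(\<Prod>r<Suc m. inverse z^(s r - (if r < Suc m then c r else 0))) * det (mat (Suc m) (Suc m) (\<lambda>(i,j). Qv X z m (if j < Suc m then c j else 0) i j))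
       = (\<Prod>j<Suc m. inverse z^(s j - c j)) * det (mat (Suc m) (Suc m) (\<lambda>(i,j). Qv X z m (c j) i j))"
    proof -
      have "(\<Prod>r<Suc m. inverse z^(s r - (if r < Suc m then c r else 0))) = (\<Prod>j<Suc m. inverse z^(s j - c j))"
        by (intro prod.cong) auto
      moreover have "det (mat (Suc m) (Suc m) (\<lambda>(i,j). Qv X z m (if j < Suc m then c j else 0) i j)) =
          det (mat (Suc m) (Suc m) (\<lambda>(i,j). Qv X z m (c j) i j))"
        by (rule det_mat_cong) auto
      ultimately show ?thesis by simp
    qed
  next
    fix \<nu> assume nu: "\<nu> \<in> HS (2*m+1) (Suc m) s"
    show "(\<lambda>r. if r < Suc m then restrict \<nu> {0..<Suc m} r else 0) = \<nu>"
      using nu by (auto simp: HS_def fun_eq_iff)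
    show "restrict \<nu> {0..<Suc m} \<in> PiE {0..<Suc m} ?K" using nu by (auto simp: HS_def)
  qed
  finally show ?thesis by simp
qed

lemma entryE:
  fixes \<phi> :: "nat \<Rightarrow> 'a::field"
  assumes pq: "p \<le> q" and j: "j \<le> m"
  shows "(\<Sum>b\<in>{p..q}. w^(q - b) * (\<phi> (b + Suc m - j) - w * \<phi> (b + m - j)))
      = \<phi> (q + Suc m - j) - w^(q - p + 1) * \<phi> (p + m - j)"
proof -
  define d where "d = q - p"
  define e where "e = p + m - j"
  have q: "q = p + d" using pq d_def by simp
  have "(\<Sum>b\<in>{p..q}. w^(q - b) * (\<phi> (b + Suc m - j) - w * \<phi> (b + m - j))) =
        (\<Sum>a<Suc d. w^(d - a) * (\<phi> (Suc (e + a)) - w * \<phi> (e + a)))"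
    unfolding q sum_ivl_shift
    by (intro sum.cong refl) (use j in \<open>auto simp: e_def intro!: arg_cong2[where f="(-)"] arg_cong[where f=\<phi>]\<close>)
  also have "\<dots> = \<phi> (Suc (e + d)) - w^(Suc d) * \<phi> e" by (rule tel)
  also have "Suc (e + d) = q + Suc m - j" using j q by (simp add: e_def)
  finally show ?thesis by (simp add: e_def d_def)
qed

lemma stepF:
  fixes X :: "nat \<Rightarrow> 'a::field"
  assumes z: "X m \<noteq> 0" and mono: "\<And>j. s (Suc j) \<le> s j" and s0: "s (Suc m) = 0"
  shows "det (mat (Suc m) (Suc m) (\<lambda>(i,j). \<Sum>b\<in>{s (Suc j)..s j}. inverse (X m)^(s j - b) * ((if i < m then 1 else X m - inverse (X m)) * Qv X (X m) m b i j)))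
     = Adet X (Suc m) s"
proof -
  let ?z = "X m"
  let ?M = "\<lambda>i j. Fp (s j + Suc m - j) (X i)"
  let ?c = "\<lambda>j. inverse ?z ^ (s j - s (Suc j) + 1)"
  have "det (mat (Suc m) (Suc m) (\<lambda>(i,j). \<Sum>b\<in>{s (Suc j)..s j}. inverse ?z^(s j - b) * ((if i < m then 1 else ?z - inverse ?z) * Qv X ?z m b i j)))
     = det (mat (Suc m) (Suc m) (\<lambda>(i,j). ?M i j - (if Suc j < Suc m then ?c j * ?M i (Suc j) else 0)))"
  proof (rule det_mat_cong)
    fix i j assume i: "i < Suc m" and j: "j < Suc m"
    show "(\<lambda>(i,j). \<Sum>b\<in>{s (Suc j)..s j}. inverse ?z^(s j - b) * ((if i < m then 1 else ?z - inverse ?z) * Qv X ?z m b i j)) (i,j) =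
       (\<lambda>(i,j). ?M i j - (if Suc j < Suc m then ?c j * ?M i (Suc j) else 0)) (i,j)"
    proof (cases "i < m")
      case True
      have "(\<Sum>b\<in>{s (Suc j)..s j}. inverse ?z^(s j - b) * ((if i < m then 1 else ?z - inverse ?z) * Qv X ?z m b i j))
         = (\<Sum>b\<in>{s (Suc j)..s j}. inverse ?z^(s j - b) * (Fp (b + Suc m - j) (X i) - inverse ?z * Fp (b + m - j) (X i)))"
        using True by (simp add: Qv_def)
      also have "\<dots> = Fp (s j + Suc m - j) (X i) - inverse ?z^(s j - s (Suc j) + 1) * Fp (s (Suc j) + m - j) (X i)"
        by (rule entryE[where \<phi>="\<lambda>k. Fp k (X i)"]) (use mono j in auto)
      also have "\<dots> = ?M i j - (if Suc j < Suc m then ?c j * ?M i (Suc j) else 0)"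
      proof (cases "Suc j < Suc m")
        case False
        hence "j = m" using j by simp
        thus ?thesis using s0 by simp
      qed simp
      finally show ?thesis by simp
    next
      case False
      hence im: "i = m" using i by simp
      have "(\<Sum>b\<in>{s (Suc j)..s j}. inverse ?z^(s j - b) * ((if i < m then 1 else ?z - inverse ?z) * Qv X ?z m b i j))
         = (\<Sum>b\<in>{s (Suc j)..s j}. inverse ?z^(s j - b) * (?z^(b + Suc m - j) - inverse ?z * ?z^(b + m - j)))"
      proof (intro sum.cong refl)
        fix b assume "b \<in> {s (Suc j)..s j}"
        have "b + Suc m - j = Suc (b + m - j)" using j by simp
        thus "inverse ?z^(s j - b) * ((if i < m then 1 else ?z - inverse ?z) * Qv X ?z m b i j) =
          inverse ?z^(s j - b) * (?z^(b + Suc m - j) - inverse ?z * ?z^(b + m - j))"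
          using False by (simp add: Qv_def algebra_simps)
      qed
      also have "\<dots> = ?z^(s j + Suc m - j) - inverse ?z^(s j - s (Suc j) + 1) * ?z^(s (Suc j) + m - j)"
        by (rule entryE[where \<phi>="\<lambda>k. ?z ^ k"]) (use mono j in auto)
      also have "\<dots> = ?M i j - (if Suc j < Suc m then ?c j * ?M i (Suc j) else 0)"
      proof -
        have L: "s j + Suc m - j = (s j - s (Suc j) + 1) + (s (Suc j) + m - j)" using j mono[of j] by simp
        have inv: "inverse ?z^(s j - s (Suc j) + 1) * inverse ?z^(s (Suc j) + m - j) = inverse ?z^(s j + Suc m - j)"
          by (subst L) (simp add: power_add)
        show ?thesis
        proof (cases "Suc j < Suc m")
          case True
          have "s (Suc j) + Suc m - Suc j = s (Suc j) + m - j" using True by simp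
          thus ?thesis using True im inv by (simp add: Fp_def algebra_simps)
        next
          case False
          hence jm: "j = m" using j by simp
          have "inverse ?z^(s j - s (Suc j) + 1) = inverse ?z^(s j + Suc m - j)" using jm s0 by simp
          thus ?thesis using False im jm s0 by (simp add: Fp_def)
        qed
      qed
      finally show ?thesis by simp
    qed
  qed
  also have "\<dots> = det (mat (Suc m) (Suc m) (\<lambda>(i,j). ?M i j))" by (rule det_colop)
  also have "\<dots> = Adet X (Suc m) s" by (simp add: Adet_def)
  finally show ?thesis .
qed




theorem branch:
  fixes X :: "nat \<Rightarrow> 'a::field"
  assumes X: "\<And>i. i < Suc m \<Longrightarrow> X i \<noteq> 0" and mono: "\<And>j. s (Suc j) \<le> s j" and s0: "\<And>r. Suc m \<le> r \<Longrightarrow> s r = 0"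
  shows "Adet X (Suc m) s = (X m - inverse (X m)) * (\<Prod>i<m. tt (X i) - tt (X m)) *
    (\<Sum>\<nu>\<in>HS (2*m+1) (Suc m) s. (\<Prod>r<Suc m. inverse (X m)^(s r - \<nu> r)) *
       (\<Sum>\<mu>\<in>HS (2*m) (Suc m) \<nu>. (\<Prod>r<Suc m. X m^(\<nu> r - \<mu> r)) * Adet X m \<mu>))"
proof -
  let ?z = "X m"
  have z: "?z \<noteq> 0" using X by simp
  have inner: "(\<Prod>i<m. tt (X i) - tt ?z) * (\<Sum>\<mu>\<in>HS (2*m) (Suc m) \<nu>. (\<Prod>r<Suc m. ?z^(\<nu> r - \<mu> r)) * Adet X m \<mu>)
     = det (mat (Suc m) (Suc m) (\<lambda>(i,j). Qv X ?z m (\<nu> j) i j))"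
    if nu: "\<nu> \<in> HS (2*m+1) (Suc m) s" for \<nu>
  proof -
    have nu0: "\<nu> (Suc m) = 0" using nu by (auto simp: HS_def)
    have numono: "\<nu> (Suc j) \<le> \<nu> j" if "j < m" for j
    proof -
      have "\<nu> (Suc j) \<le> s (Suc j)" using nu that by (auto simp: HS_def)
      also have "s (Suc j) \<le> \<nu> j" using nu that by (auto simp: HS_def)
      finally show ?thesis .
    qed
    have "(\<Prod>i<m. tt (X i) - tt ?z) * (\<Sum>\<mu>\<in>HS (2*m) (Suc m) \<nu>. (\<Prod>r<Suc m. ?z^(\<nu> r - \<mu> r)) * Adet X m \<mu>)
      = ?z^(\<nu> m) * ((\<Prod>i<m. tt (X i) - tt ?z) * det (mat m m (\<lambda>(i,j). \<Sum>a\<in>{\<nu> (Suc j)..\<nu> j}. ?z^(\<nu> j - a) * Fp (a + m - j) (X i))))"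
      by (subst stepA[of \<nu> m, OF nu0]) (simp only: mult.left_commute)
    also have "\<dots> = ?z^(\<nu> m) * det (mat m m (\<lambda>(i,j). Pf ?z \<nu> m j (X i) - ?z^(\<nu> j - \<nu> (Suc j) + 1) * Pf ?z \<nu> m (Suc j) (X i)))"
      by (subst stepB) (use X z numono in auto)
    also have "\<dots> = det (mat (Suc m) (Suc m) (\<lambda>(i,j). if i < m then Pf ?z \<nu> m j (X i) else ?z^(\<nu> j + m - j)))"
      by (rule stepC[of "X m" m \<nu>, OF z numono])
    finally show ?thesis by (simp add: Qv_eq)
  qed
  have "(X m - inverse (X m)) * (\<Prod>i<m. tt (X i) - tt (X m)) *
    (\<Sum>\<nu>\<in>HS (2*m+1) (Suc m) s. (\<Prod>r<Suc m. inverse (X m)^(s r - \<nu> r)) *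
       (\<Sum>\<mu>\<in>HS (2*m) (Suc m) \<nu>. (\<Prod>r<Suc m. X m^(\<nu> r - \<mu> r)) * Adet X m \<mu>))
    = (?z - inverse ?z) * (\<Sum>\<nu>\<in>HS (2*m+1) (Suc m) s. (\<Prod>r<Suc m. inverse ?z^(s r - \<nu> r)) *
       ((\<Prod>i<m. tt (X i) - tt ?z) * (\<Sum>\<mu>\<in>HS (2*m) (Suc m) \<nu>. (\<Prod>r<Suc m. X m^(\<nu> r - \<mu> r)) * Adet X m \<mu>)))"
    by (simp add: sum_distrib_left mult_ac)
  also have "\<dots> = (?z - inverse ?z) * (\<Sum>\<nu>\<in>HS (2*m+1) (Suc m) s. (\<Prod>r<Suc m. inverse ?z^(s r - \<nu> r)) *
        det (mat (Suc m) (Suc m) (\<lambda>(i,j). Qv X ?z m (\<nu> j) i j)))"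
    by (intro arg_cong2[where f="(*)"] refl sum.cong) (erule inner)
  also have "\<dots> = det (mat (Suc m) (Suc m) (\<lambda>(i,j). \<Sum>b\<in>{s (Suc j)..s j}. inverse ?z^(s j - b) * ((if i < m then 1 else ?z - inverse ?z) * Qv X ?z m b i j)))"
    by (rule stepE)
  also have "\<dots> = Adet X (Suc m) s"
    by (rule stepF[of X m s, OF z mono]) (simp add: s0)
  finally show ?thesis by simp
qed




definition dg :: "nat \<Rightarrow> (nat \<Rightarrow> nat) \<Rightarrow> (nat \<times> nat) set" where
  "dg n s = (SIGMA r:{..<n}. {..<s r})"

definition FT :: "nat \<Rightarrow> nat \<Rightarrow> (nat \<Rightarrow> nat) \<Rightarrow> (nat \<times> nat \<Rightarrow> nat) set" where
  "FT K n s = {T. T \<in> dg n s \<rightarrow>\<^sub>E {..<K} \<and>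
     (\<forall>r c. (r,c) \<in> dg n s \<and> (r, Suc c) \<in> dg n s \<longrightarrow> T (r,c) \<le> T (r, Suc c)) \<and>
     (\<forall>r c. (r,c) \<in> dg n s \<and> (Suc r, c) \<in> dg n s \<longrightarrow> T (r,c) < T (Suc r, c)) \<and>
     (\<forall>r c. (r,c) \<in> dg n s \<longrightarrow> 2*r \<le> T (r,c))}"

definition wt :: "(nat \<Rightarrow> 'a::field) \<Rightarrow> nat \<Rightarrow> 'a" where
  "wt X k = (if even k then X (k div 2) else inverse (X (k div 2)))"

definition W :: "(nat \<Rightarrow> 'a::field) \<Rightarrow> nat \<Rightarrow> (nat \<Rightarrow> nat) \<Rightarrow> (nat \<times> nat \<Rightarrow> nat) \<Rightarrow> 'a" where
  "W X n s T = (\<Prod>r<n. \<Prod>c<s r. wt X (T (r,c)))"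

definition SP :: "(nat \<Rightarrow> 'a::field) \<Rightarrow> nat \<Rightarrow> nat \<Rightarrow> (nat \<Rightarrow> nat) \<Rightarrow> 'a" where
  "SP X K n s = (\<Sum>T\<in>FT K n s. W X n s T)"

lemma dg_iff[simp]: "(r,c) \<in> dg n s \<longleftrightarrow> r < n \<and> c < s r"
  by (auto simp: dg_def)

lemma finite_dg[simp]: "finite (dg n s)" by (simp add: dg_def)

lemma finite_FT[simp]: "finite (FT K n s)"
proof -
  have "FT K n s \<subseteq> dg n s \<rightarrow>\<^sub>E {..<K}" by (auto simp: FT_def)
  moreover have "finite (dg n s \<rightarrow>\<^sub>E {..<K})" by (rule finite_PiE) auto
  ultimately show ?thesis by (rule finite_subset)
qed

lemma finite_HS[simp]: "finite (HS K n s)"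
proof -
  have "HS K n s \<subseteq> (\<lambda>c r. if r < n then c r else 0) ` PiE {..<n} (\<lambda>r. {..s r})"
  proof
    fix \<mu> assume mu: "\<mu> \<in> HS K n s"
    have "\<mu> = (\<lambda>r. if r < n then restrict \<mu> {..<n} r else 0)"
      using mu by (auto simp: HS_def fun_eq_iff)
    moreover have "restrict \<mu> {..<n} \<in> PiE {..<n} (\<lambda>r. {..s r})" using mu by (auto simp: HS_def)
    ultimately show "\<mu> \<in> (\<lambda>c r. if r < n then c r else 0) ` PiE {..<n} (\<lambda>r. {..s r})" by blast
  qed
  moreover have "finite (PiE {..<n} (\<lambda>r. {..s r}))" by (rule finite_PiE) auto
  ultimately show ?thesis using finite_subset by blast
qed

lemma FT_row_mono:
  assumes T: "T \<in> FT K n s" and rc: "(r, c') \<in> dg n s" and le: "c \<le> c'"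
  shows "T (r,c) \<le> T (r,c')"
  using rc le
proof (induct c' arbitrary: c)
  case 0 thus ?case by simp
next
  case (Suc c')
  show ?case
  proof (cases "c = Suc c'")
    case False
    hence "c \<le> c'" using Suc.prems by simp
    moreover have "(r,c') \<in> dg n s" using Suc.prems by simp
    ultimately have "T (r,c) \<le> T (r,c')" using Suc.hyps by blast
    also have "T (r,c') \<le> T (r, Suc c')" using T Suc.prems unfolding FT_def by auto
    finally show ?thesis .
  qed simp
qed




lemma fiber_sum:
  fixes X :: "nat \<Rightarrow> 'a::field"
  assumes mu: "\<mu> \<in> HS K n s" and flag: "\<And>r. r < n \<Longrightarrow> K < 2*r \<Longrightarrow> s r = 0"
  shows "(\<Sum>T\<in>{T\<in>FT (Suc K) n s. \<forall>r<n. \<forall>c<s r. (T (r,c) < K \<longleftrightarrow> c < \<mu> r)}. W X n s T)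
     = (\<Prod>r<n. wt X K ^ (s r - \<mu> r)) * SP X K n \<mu>"
proof -
  let ?fib = "{T\<in>FT (Suc K) n s. \<forall>r<n. \<forall>c<s r. (T (r,c) < K \<longleftrightarrow> c < \<mu> r)}"
  have mule: "\<And>r. r < n \<Longrightarrow> \<mu> r \<le> s r" and smu: "\<And>r. r < n \<Longrightarrow> s (Suc r) \<le> \<mu> r"
    using mu by (auto simp: HS_def)
  have sub: "\<And>r c. (r,c) \<in> dg n \<mu> \<Longrightarrow> (r,c) \<in> dg n s" using mule by (auto dest: order.strict_trans2)
  let ?res = "\<lambda>T. restrict T (dg n \<mu>)"
  let ?ext = "\<lambda>T' p. if p \<in> dg n s then (if p \<in> dg n \<mu> then T' p else K) else undefined"
  have "(\<Sum>T\<in>?fib. W X n s T) = (\<Sum>T'\<in>FT K n \<mu>. (\<Prod>r<n. wt X K ^ (s r - \<mu> r)) * W X n \<mu> T')"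
  proof (rule sum.reindex_bij_witness[where i="?ext" and j="?res"])
    fix T assume T: "T \<in> ?fib"
    hence TF: "T \<in> FT (Suc K) n s" and ch: "\<And>r c. r < n \<Longrightarrow> c < s r \<Longrightarrow> (T (r,c) < K \<longleftrightarrow> c < \<mu> r)" by auto
    have PE: "T \<in> dg n s \<rightarrow>\<^sub>E {..<Suc K}" using TF by (simp add: FT_def)
    show "?ext (?res T) = T"
    proof
      fix p
      show "?ext (?res T) p = T p"
      proof (cases "p \<in> dg n s")
        case True
        obtain r c where p: "p = (r,c)" by force
        show ?thesis
        proof (cases "p \<in> dg n \<mu>")
          case False
          hence "\<not> T (r,c) < K" using ch True p by auto
          moreover have "T (r,c) < Suc K" using PE True p by auto
          ultimately show ?thesis using True False p by simp
        qed (use True in simp)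
      next
        case False thus ?thesis using PiE_arb[OF PE False] by simp
      qed
    qed
    show "?res T \<in> FT K n \<mu>"
    proof -
      have "?res T \<in> dg n \<mu> \<rightarrow>\<^sub>E {..<K}"
      proof (rule PiE_I)
        fix p assume p: "p \<in> dg n \<mu>"
        obtain r c where pe: "p = (r,c)" by force
        have r: "r < n" and c: "c < \<mu> r" using p pe by auto
        have "c < s r" using c mule[OF r] by simp
        hence "T (r,c) < K" using ch[OF r] c by simp
        thus "?res T p \<in> {..<K}" using p pe by simp
      qed simp
      moreover have "\<forall>r c. (r,c) \<in> dg n \<mu> \<and> (r, Suc c) \<in> dg n \<mu> \<longrightarrow> ?res T (r,c) \<le> ?res T (r, Suc c)"
        using TF sub by (auto simp: FT_def simp del: dg_iff)
      moreover have "\<forall>r c. (r,c) \<in> dg n \<mu> \<and> (Suc r, c) \<in> dg n \<mu> \<longrightarrow> ?res T (r,c) < ?res T (Suc r, c)"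
        using TF sub by (auto simp: FT_def simp del: dg_iff)
      moreover have "\<forall>r c. (r,c) \<in> dg n \<mu> \<longrightarrow> 2*r \<le> ?res T (r,c)"
        using TF sub by (auto simp: FT_def simp del: dg_iff)
      ultimately show ?thesis by (simp add: FT_def)
    qed
    show "(\<Prod>r<n. wt X K ^ (s r - \<mu> r)) * W X n \<mu> (?res T) = W X n s T"
    proof -
      have "W X n s T = (\<Prod>r<n. (\<Prod>c<\<mu> r. wt X (T (r,c))) * wt X K ^ (s r - \<mu> r))"
        unfolding W_def
      proof (rule prod.cong[OF refl])
        fix r assume r: "r \<in> {..<n}"
        have "(\<Prod>c<s r. wt X (T (r,c))) = (\<Prod>c\<in>{0..<\<mu> r}. wt X (T (r,c))) * (\<Prod>c\<in>{\<mu> r..<s r}. wt X (T (r,c)))"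
          using mule[of r] r by (simp add: prod.atLeastLessThan_concat lessThan_atLeast0)
        also have "(\<Prod>c\<in>{\<mu> r..<s r}. wt X (T (r,c))) = (\<Prod>c\<in>{\<mu> r..<s r}. wt X K)"
        proof (rule prod.cong[OF refl])
          fix c assume c: "c \<in> {\<mu> r..<s r}"
          hence "\<not> T (r,c) < K" using ch r by auto
          moreover have "T (r,c) < Suc K" using PE c r by auto
          ultimately show "wt X (T (r,c)) = wt X K" by (simp add: less_Suc_eq)
        qed
        also have "\<dots> = wt X K ^ (s r - \<mu> r)" by simp
        finally show "(\<Prod>c<s r. wt X (T (r,c))) = (\<Prod>c<\<mu> r. wt X (T (r,c))) * wt X K ^ (s r - \<mu> r)"
          by (simp add: lessThan_atLeast0)
      qed
      also have "\<dots> = (\<Prod>r<n. wt X K ^ (s r - \<mu> r)) * W X n \<mu> (?res T)"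
        by (simp add: W_def prod.distrib mult_ac)
      finally show ?thesis by simp
    qed
  next
    fix T' assume T': "T' \<in> FT K n \<mu>"
    have PE: "T' \<in> dg n \<mu> \<rightarrow>\<^sub>E {..<K}" using T' by (simp add: FT_def)
    show "?res (?ext T') = T'"
    proof
      fix p show "?res (?ext T') p = T' p"
        using PE sub by (cases p) (auto simp: PiE_def extensional_def simp del: dg_iff)
    qed
    show "?ext T' \<in> ?fib"
    proof -
      have A: "?ext T' \<in> dg n s \<rightarrow>\<^sub>E {..<Suc K}" using PE by (auto simp: PiE_def extensional_def Pi_def less_Suc_eq)
      have B: "\<forall>r c. (r,c) \<in> dg n s \<and> (r, Suc c) \<in> dg n s \<longrightarrow> ?ext T' (r,c) \<le> ?ext T' (r, Suc c)"
      proof (intro allI impI)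
        fix r c assume rc: "(r,c) \<in> dg n s \<and> (r, Suc c) \<in> dg n s"
        show "?ext T' (r,c) \<le> ?ext T' (r, Suc c)"
        proof (cases "(r, Suc c) \<in> dg n \<mu>")
          case True
          hence "(r,c) \<in> dg n \<mu>" by simp
          thus ?thesis using True rc T' by (auto simp: FT_def simp del: dg_iff)
        next
          case False
          thus ?thesis using rc PE by (auto simp: PiE_def Pi_def less_imp_le simp del: dg_iff)
        qed
      qed
      have C: "\<forall>r c. (r,c) \<in> dg n s \<and> (Suc r, c) \<in> dg n s \<longrightarrow> ?ext T' (r,c) < ?ext T' (Suc r, c)"
      proof (intro allI impI)
        fix r c assume rc: "(r,c) \<in> dg n s \<and> (Suc r, c) \<in> dg n s"
        hence r: "r < n" and c: "c < s (Suc r)" by auto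
        have inr: "(r,c) \<in> dg n \<mu>" using smu[OF r] r c by simp
        show "?ext T' (r,c) < ?ext T' (Suc r, c)"
        proof (cases "(Suc r, c) \<in> dg n \<mu>")
          case True
          thus ?thesis using inr rc T' by (auto simp: FT_def simp del: dg_iff)
        next
          case False
          thus ?thesis using inr rc PE by (auto simp: PiE_def Pi_def simp del: dg_iff)
        qed
      qed
      have D: "\<forall>r c. (r,c) \<in> dg n s \<longrightarrow> 2*r \<le> ?ext T' (r,c)"
      proof (intro allI impI)
        fix r c assume rc: "(r,c) \<in> dg n s"
        show "2*r \<le> ?ext T' (r,c)"
        proof (cases "(r,c) \<in> dg n \<mu>")
          case True thus ?thesis using rc T' by (auto simp: FT_def simp del: dg_iff)
        next
          case False
          have "\<not> K < 2*r" using flag[of r] rc by auto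
          thus ?thesis using False rc by simp
        qed
      qed
      have E: "\<forall>r<n. \<forall>c<s r. (?ext T' (r,c) < K \<longleftrightarrow> c < \<mu> r)"
        using PE by (auto simp: PiE_def Pi_def)
      show ?thesis using A B C D E by (simp add: FT_def)
    qed
  qed
  also have "\<dots> = (\<Prod>r<n. wt X K ^ (s r - \<mu> r)) * SP X K n \<mu>"
    by (simp add: SP_def sum_distrib_left)
  finally show ?thesis .
qed




lemma H:
  fixes X :: "nat \<Rightarrow> 'a::field"
  assumes mono: "\<And>r. s (Suc r) \<le> s r" and s0: "\<And>r. n \<le> r \<Longrightarrow> s r = 0"
    and flag: "\<And>r. r < n \<Longrightarrow> K < 2*r \<Longrightarrow> s r = 0"
  shows "SP X (Suc K) n s = (\<Sum>\<mu>\<in>HS K n s. (\<Prod>r<n. wt X K ^ (s r - \<mu> r)) * SP X K n \<mu>)"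
proof -
  define fib where "fib \<mu> = {T\<in>FT (Suc K) n s. \<forall>r<n. \<forall>c<s r. (T (r,c) < K \<longleftrightarrow> c < \<mu> r)}" for \<mu>
  have cover: "FT (Suc K) n s = (\<Union>\<mu>\<in>HS K n s. fib \<mu>)"
  proof
    show "(\<Union>\<mu>\<in>HS K n s. fib \<mu>) \<subseteq> FT (Suc K) n s" by (auto simp: fib_def)
  next
    show "FT (Suc K) n s \<subseteq> (\<Union>\<mu>\<in>HS K n s. fib \<mu>)"
    proof
      fix T assume T: "T \<in> FT (Suc K) n s"
      define \<mu> where "\<mu> r = (if r < n then (LEAST c. c = s r \<or> K \<le> T (r,c)) else 0)" for r
      have mule: "\<mu> r \<le> s r" if "r < n" for r
        using that by (auto simp: \<mu>_def intro: Least_le)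
      have ch: "T (r,c) < K \<longleftrightarrow> c < \<mu> r" if r: "r < n" and c: "c < s r" for r c
      proof
        assume lt: "T (r,c) < K"
        show "c < \<mu> r"
        proof (rule ccontr)
          assume "\<not> c < \<mu> r"
          hence le: "\<mu> r \<le> c" by simp
          have "\<mu> r = s r \<or> K \<le> T (r, \<mu> r)"
            using r LeastI[of "\<lambda>c. c = s r \<or> K \<le> T (r,c)" "s r"] by (simp add: \<mu>_def)
          hence "K \<le> T (r, \<mu> r)" using le c by auto
          also have "T (r, \<mu> r) \<le> T (r,c)" by (rule FT_row_mono[OF T]) (use r c le in auto)
          finally show False using lt by simp
        qed
      next
        assume "c < \<mu> r"
        hence "\<not> (c = s r \<or> K \<le> T (r,c))"
          using r not_less_Least[of c "\<lambda>c. c = s r \<or> K \<le> T (r,c)"] by (simp add: \<mu>_def)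
        thus "T (r,c) < K" by simp
      qed
      have "\<mu> \<in> HS K n s"
        unfolding HS_def
      proof (intro CollectI conjI allI impI)
        fix r assume r: "r < n"
        show "\<mu> r \<le> s r" by (rule mule[OF r])
        show "s (Suc r) \<le> \<mu> r"
        proof (cases "Suc r < n")
          case False thus ?thesis using s0[of "Suc r"] by simp
        next
          case True
          show ?thesis
          proof (rule ccontr)
            assume "\<not> s (Suc r) \<le> \<mu> r"
            hence c1: "\<mu> r < s (Suc r)" by simp
            hence c2: "\<mu> r < s r" using mono[of r] by simp
            have "T (r, \<mu> r) < T (Suc r, \<mu> r)" using T True c1 c2 r by (auto simp: FT_def)
            also have "T (Suc r, \<mu> r) \<le> K" using T True c1 by (auto simp: FT_def PiE_def Pi_def less_Suc_eq_le)
            finally have "T (r, \<mu> r) < K" by simp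
            with ch[OF r c2] show False by simp
          qed
        qed
        show "\<mu> r = 0" if "K \<le> 2*r"
        proof (rule ccontr)
          assume "\<mu> r \<noteq> 0"
          hence c: "0 < \<mu> r" by simp
          hence c2: "0 < s r" using mule[OF r] by simp
          have "T (r,0) < K" using ch[OF r c2] c by simp
          moreover have "2*r \<le> T (r,0)" using T r c2 by (auto simp: FT_def)
          ultimately show False using that by simp
        qed
      next
        fix r assume "n \<le> r" thus "\<mu> r = 0" by (simp add: \<mu>_def)
      qed
      moreover have "T \<in> fib \<mu>" using T ch by (auto simp: fib_def)
      ultimately show "T \<in> (\<Union>\<mu>\<in>HS K n s. fib \<mu>)" by blast
    qed
  qed
  have disj: "fib \<mu> \<inter> fib \<mu>' = {}" if mu: "\<mu> \<in> HS K n s" and mu': "\<mu>' \<in> HS K n s" and ne: "\<mu> \<noteq> \<mu>'" for \<mu> \<mu>'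
  proof (rule ccontr)
    assume "fib \<mu> \<inter> fib \<mu>' \<noteq> {}"
    then obtain T where T1: "T \<in> fib \<mu>" and T2: "T \<in> fib \<mu>'" by blast
    have "\<mu> = \<mu>'"
    proof
      fix r show "\<mu> r = \<mu>' r"
      proof (cases "r < n")
        case False thus ?thesis using mu mu' by (auto simp: HS_def)
      next
        case True
        have a: "\<mu> r \<le> s r" "\<mu>' r \<le> s r" using mu mu' True by (auto simp: HS_def)
        have b: "\<And>c. c < s r \<Longrightarrow> (c < \<mu> r \<longleftrightarrow> c < \<mu>' r)" using T1 T2 True by (auto simp: fib_def)
        show ?thesis
        proof (rule ccontr)
          assume "\<mu> r \<noteq> \<mu>' r"
          hence "\<mu> r < \<mu>' r \<or> \<mu>' r < \<mu> r" by auto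
          thus False
          proof
            assume "\<mu> r < \<mu>' r" thus False using b[of "\<mu> r"] a by simp
          next
            assume "\<mu>' r < \<mu> r" thus False using b[of "\<mu>' r"] a by simp
          qed
        qed
      qed
    qed
    thus False using ne by simp
  qed
  have "SP X (Suc K) n s = (\<Sum>T\<in>(\<Union>\<mu>\<in>HS K n s. fib \<mu>). W X n s T)" by (simp add: SP_def cover[symmetric])
  also have "\<dots> = (\<Sum>\<mu>\<in>HS K n s. \<Sum>T\<in>fib \<mu>. W X n s T)"
  proof (rule sum.UNION_disjoint[OF finite_HS])
    show "\<forall>\<mu>\<in>HS K n s. finite (fib \<mu>)" by (auto simp: fib_def)
    show "\<forall>\<mu>\<in>HS K n s. \<forall>\<mu>'\<in>HS K n s. \<mu> \<noteq> \<mu>' \<longrightarrow> fib \<mu> \<inter> fib \<mu>' = {}" using disj by blast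
  qed
  also have "\<dots> = (\<Sum>\<mu>\<in>HS K n s. (\<Prod>r<n. wt X K ^ (s r - \<mu> r)) * SP X K n \<mu>)"
    by (intro sum.cong refl) (unfold fib_def, rule fiber_sum, auto intro: flag)
  finally show ?thesis .
qed




fun Dn :: "(nat \<Rightarrow> 'a::field) \<Rightarrow> nat \<Rightarrow> 'a" where
  "Dn X 0 = 1"
| "Dn X (Suc m) = Dn X m * ((X m - inverse (X m)) * (\<Prod>i<m. tt (X i) - tt (X m)))"

lemma SP_shrink:
  assumes "\<mu> m = 0"
  shows "SP X K (Suc m) \<mu> = SP X K m \<mu>"
proof -
  have dgeq: "dg (Suc m) \<mu> = dg m \<mu>" using assms by (auto simp: dg_def less_Suc_eq)
  have "FT K (Suc m) \<mu> = FT K m \<mu>" unfolding FT_def dgeq ..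
  moreover have "W X (Suc m) \<mu> T = W X m \<mu> T" for T using assms by (simp add: W_def)
  ultimately show ?thesis by (simp add: SP_def)
qed

lemma SP_zero: "SP X 0 0 s = 1"
proof -
  have "dg 0 s = {}" by (simp add: dg_def)
  hence "FT 0 0 s = {\<lambda>_. undefined}" by (auto simp: FT_def)
  thus ?thesis by (simp add: SP_def W_def)
qed

lemma Adet_zero: "Adet X 0 s = 1"
  by (simp add: Adet_def)

theorem King:
  fixes X :: "nat \<Rightarrow> 'a::field"
  assumes X: "\<And>i. i < n \<Longrightarrow> X i \<noteq> 0"
  shows "(\<And>r. s (Suc r) \<le> s r) \<Longrightarrow> (\<And>r. n \<le> r \<Longrightarrow> s r = 0) \<Longrightarrow> Dn X n * SP X (2*n) n s = Adet X n s"
  using X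
proof (induct n arbitrary: s)
  case 0 thus ?case by (simp add: SP_zero Adet_zero)
next
  case (Suc m)
  let ?z = "X m"
  have wt1: "wt X (2*m+1) = inverse ?z" by (simp add: wt_def)
  have wt0: "wt X (2*m) = ?z" by (simp add: wt_def)
  have S1: "SP X (2 * Suc m) (Suc m) s =
     (\<Sum>\<nu>\<in>HS (2*m+1) (Suc m) s. (\<Prod>r<Suc m. inverse ?z ^ (s r - \<nu> r)) * SP X (2*m+1) (Suc m) \<nu>)"
  proof -
    have "SP X (2 * Suc m) (Suc m) s = SP X (Suc (2*m+1)) (Suc m) s" by simp
    also have "\<dots> = (\<Sum>\<nu>\<in>HS (2*m+1) (Suc m) s. (\<Prod>r<Suc m. wt X (2*m+1) ^ (s r - \<nu> r)) * SP X (2*m+1) (Suc m) \<nu>)"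
      by (rule H) (use Suc.prems in auto)
    finally show ?thesis by (simp only: wt1)
  qed
  have S2: "SP X (2*m+1) (Suc m) \<nu> =
     (\<Sum>\<mu>\<in>HS (2*m) (Suc m) \<nu>. (\<Prod>r<Suc m. ?z ^ (\<nu> r - \<mu> r)) * SP X (2*m) m \<mu>)"
    if nu: "\<nu> \<in> HS (2*m+1) (Suc m) s" for \<nu>
  proof -
    have numono: "\<nu> (Suc r) \<le> \<nu> r" for r
    proof (cases "r < m")
      case True
      have "\<nu> (Suc r) \<le> s (Suc r)" using nu True by (auto simp: HS_def)
      also have "s (Suc r) \<le> \<nu> r" using nu True by (auto simp: HS_def)
      finally show ?thesis .
    next
      case False thus ?thesis using nu by (auto simp: HS_def)
    qed
    have "SP X (2*m+1) (Suc m) \<nu> = SP X (Suc (2*m)) (Suc m) \<nu>" by simp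
    also have "\<dots> = (\<Sum>\<mu>\<in>HS (2*m) (Suc m) \<nu>. (\<Prod>r<Suc m. wt X (2*m) ^ (\<nu> r - \<mu> r)) * SP X (2*m) (Suc m) \<mu>)"
      by (rule H) (use numono nu in \<open>auto simp: HS_def\<close>)
    also have "\<dots> = (\<Sum>\<mu>\<in>HS (2*m) (Suc m) \<nu>. (\<Prod>r<Suc m. ?z ^ (\<nu> r - \<mu> r)) * SP X (2*m) m \<mu>)"
    proof (intro sum.cong refl)
      fix \<mu> assume "\<mu> \<in> HS (2*m) (Suc m) \<nu>"
      hence "\<mu> m = 0" by (auto simp: HS_def)
      thus "(\<Prod>r<Suc m. wt X (2*m) ^ (\<nu> r - \<mu> r)) * SP X (2*m) (Suc m) \<mu> = (\<Prod>r<Suc m. ?z ^ (\<nu> r - \<mu> r)) * SP X (2*m) m \<mu>"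
        by (simp only: wt0 SP_shrink)
    qed
    finally show ?thesis .
  qed
  have IH: "Dn X m * SP X (2*m) m \<mu> = Adet X m \<mu>" if mu: "\<mu> \<in> HS (2*m) (Suc m) \<nu>" and nu: "\<nu> \<in> HS (2*m+1) (Suc m) s" for \<mu> \<nu>
  proof (rule Suc.hyps)
    fix r
    show "\<mu> (Suc r) \<le> \<mu> r"
    proof (cases "Suc r < Suc m")
      case True
      have "\<mu> (Suc r) \<le> \<nu> (Suc r)" using mu True by (auto simp: HS_def)
      also have "\<nu> (Suc r) \<le> \<mu> r" using mu True by (auto simp: HS_def)
      finally show ?thesis .
    next
      case False thus ?thesis using mu by (auto simp: HS_def)
    qed
    show "m \<le> r \<Longrightarrow> \<mu> r = 0" using mu by (cases "r < Suc m") (auto simp: HS_def)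
    show "\<And>i. i < m \<Longrightarrow> X i \<noteq> 0" using Suc.prems by auto
  qed
  have eqA: "Dn X m * SP X (2 * Suc m) (Suc m) s =
     (\<Sum>\<nu>\<in>HS (2*m+1) (Suc m) s. (\<Prod>r<Suc m. inverse ?z ^ (s r - \<nu> r)) *
       (\<Sum>\<mu>\<in>HS (2*m) (Suc m) \<nu>. (\<Prod>r<Suc m. ?z ^ (\<nu> r - \<mu> r)) * (Dn X m * SP X (2*m) m \<mu>)))"
    unfolding S1 sum_distrib_left[of "Dn X m"]
  proof (intro sum.cong refl)
    fix \<nu> assume nu: "\<nu> \<in> HS (2*m+1) (Suc m) s"
    show "Dn X m * ((\<Prod>r<Suc m. inverse ?z ^ (s r - \<nu> r)) * SP X (2*m+1) (Suc m) \<nu>) =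
       (\<Prod>r<Suc m. inverse ?z ^ (s r - \<nu> r)) *
       (\<Sum>\<mu>\<in>HS (2*m) (Suc m) \<nu>. (\<Prod>r<Suc m. ?z ^ (\<nu> r - \<mu> r)) * (Dn X m * SP X (2*m) m \<mu>))"
      unfolding S2[OF nu] sum_distrib_left by (simp add: mult_ac)
  qed
  have "Dn X (Suc m) * SP X (2 * Suc m) (Suc m) s =
     (?z - inverse ?z) * (\<Prod>i<m. tt (X i) - tt ?z) * (Dn X m * SP X (2 * Suc m) (Suc m) s)"
    by (simp only: Dn.simps mult_ac)
  also have "\<dots> = (?z - inverse ?z) * (\<Prod>i<m. tt (X i) - tt ?z) *
     (\<Sum>\<nu>\<in>HS (2*m+1) (Suc m) s. (\<Prod>r<Suc m. inverse ?z ^ (s r - \<nu> r)) *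
       (\<Sum>\<mu>\<in>HS (2*m) (Suc m) \<nu>. (\<Prod>r<Suc m. ?z ^ (\<nu> r - \<mu> r)) * (Dn X m * SP X (2*m) m \<mu>)))"
    by (simp only: eqA)
  also have "\<dots> = (?z - inverse ?z) * (\<Prod>i<m. tt (X i) - tt ?z) *
     (\<Sum>\<nu>\<in>HS (2*m+1) (Suc m) s. (\<Prod>r<Suc m. inverse ?z ^ (s r - \<nu> r)) *
       (\<Sum>\<mu>\<in>HS (2*m) (Suc m) \<nu>. (\<Prod>r<Suc m. ?z ^ (\<nu> r - \<mu> r)) * Adet X m \<mu>))"
    by (intro arg_cong2[where f="(*)"] refl sum.cong) (simp add: IH)
  also have "\<dots> = Adet X (Suc m) s"
    by (rule branch[symmetric]) (use Suc.prems in auto)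
  finally show ?case .
qed




definition OT :: "nat \<Rightarrow> (nat \<Rightarrow> nat) \<Rightarrow> (nat \<times> nat \<Rightarrow> nat) set" where
  "OT n s = {T. T \<in> dg n s \<rightarrow>\<^sub>E {..<Suc (2*n)} \<and>
     (\<forall>r c. (r,c) \<in> dg n s \<and> (r, Suc c) \<in> dg n s \<longrightarrow> T (r,c) \<le> T (r, Suc c) \<and> \<not> (T (r,c) = 2*n \<and> T (r, Suc c) = 2*n)) \<and>
     (\<forall>r c. (r,c) \<in> dg n s \<and> (Suc r, c) \<in> dg n s \<longrightarrow> T (r,c) \<le> T (Suc r, c) \<and> (T (r,c) < 2*n \<and> T (Suc r, c) < 2*n \<longrightarrow> T (r,c) < T (Suc r, c))) \<and>
     (\<forall>r c. (r,c) \<in> dg n s \<and> T (r,c) < 2*n \<longrightarrow> 2*r \<le> T (r,c))}"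

definition wt' :: "(nat \<Rightarrow> 'a::field) \<Rightarrow> 'a \<Rightarrow> nat \<Rightarrow> nat \<Rightarrow> 'a" where
  "wt' X y n k = (if k = 2*n then y else wt X k)"

definition W' :: "(nat \<Rightarrow> 'a::field) \<Rightarrow> 'a \<Rightarrow> nat \<Rightarrow> (nat \<Rightarrow> nat) \<Rightarrow> (nat \<times> nat \<Rightarrow> nat) \<Rightarrow> 'a" where
  "W' X y n s T = (\<Prod>r<n. \<Prod>c<s r. wt' X y n (T (r,c)))"

definition VS :: "nat \<Rightarrow> (nat \<Rightarrow> nat) \<Rightarrow> (nat \<Rightarrow> nat) set" where
  "VS n s = {\<nu>. (\<forall>r<n. \<nu> r \<le> s r \<and> s r \<le> Suc (\<nu> r) \<and> \<nu> (Suc r) \<le> \<nu> r) \<and> (\<forall>r. n \<le> r \<longrightarrow> \<nu> r = 0)}"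

lemma finite_OT[simp]: "finite (OT n s)"
proof -
  have "OT n s \<subseteq> dg n s \<rightarrow>\<^sub>E {..<Suc (2*n)}" by (auto simp: OT_def)
  moreover have "finite (dg n s \<rightarrow>\<^sub>E {..<Suc (2*n)})" by (rule finite_PiE) auto
  ultimately show ?thesis by (rule finite_subset)
qed

lemma finite_VS[simp]: "finite (VS n s)"
proof -
  have "VS n s \<subseteq> (\<lambda>c r. if r < n then c r else 0) ` PiE {..<n} (\<lambda>r. {..s r})"
  proof
    fix \<mu> assume mu: "\<mu> \<in> VS n s"
    have "\<mu> = (\<lambda>r. if r < n then restrict \<mu> {..<n} r else 0)"
      using mu by (auto simp: VS_def fun_eq_iff)
    moreover have "restrict \<mu> {..<n} \<in> PiE {..<n} (\<lambda>r. {..s r})" using mu by (auto simp: VS_def)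
    ultimately show "\<mu> \<in> (\<lambda>c r. if r < n then c r else 0) ` PiE {..<n} (\<lambda>r. {..s r})" by blast
  qed
  moreover have "finite (PiE {..<n} (\<lambda>r. {..s r}))" by (rule finite_PiE) auto
  ultimately show ?thesis using finite_subset by blast
qed

lemma row_mono_gen:
  fixes T :: "nat \<times> nat \<Rightarrow> nat"
  assumes step: "\<And>c. (r,c) \<in> dg n s \<Longrightarrow> (r, Suc c) \<in> dg n s \<Longrightarrow> T (r,c) \<le> T (r, Suc c)"
    and rc: "(r, c') \<in> dg n s" and le: "c \<le> c'"
  shows "T (r,c) \<le> T (r,c')"
  using rc le
proof (induct c' arbitrary: c)
  case 0
  hence "c = 0" by simp
  thus ?case by simp
next
  case (Suc c')
  show ?case
  proof (cases "c = Suc c'")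
    case False
    hence "c \<le> c'" using Suc.prems by simp
    moreover have "(r,c') \<in> dg n s" using Suc.prems by simp
    ultimately have "T (r,c) \<le> T (r,c')" using Suc.hyps by blast
    also have "T (r,c') \<le> T (r, Suc c')" using step Suc.prems by auto
    finally show ?thesis .
  qed simp
qed

lemma fiberV:
  fixes X :: "nat \<Rightarrow> 'a::field"
  assumes nu: "\<nu> \<in> VS n s"
  shows "(\<Sum>T\<in>{T\<in>OT n s. \<forall>r<n. \<forall>c<s r. (T (r,c) < 2*n \<longleftrightarrow> c < \<nu> r)}. W' X y n s T)
     = (\<Prod>r<n. y ^ (s r - \<nu> r)) * SP X (2*n) n \<nu>"
proof -
  let ?K = "2*n"
  let ?fib = "{T\<in>OT n s. \<forall>r<n. \<forall>c<s r. (T (r,c) < ?K \<longleftrightarrow> c < \<nu> r)}"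
  have nule: "\<And>r. r < n \<Longrightarrow> \<nu> r \<le> s r" and snu: "\<And>r. r < n \<Longrightarrow> s r \<le> Suc (\<nu> r)"
    and numono: "\<And>r. r < n \<Longrightarrow> \<nu> (Suc r) \<le> \<nu> r" and nu0: "\<And>r. n \<le> r \<Longrightarrow> \<nu> r = 0"
    using nu by (auto simp: VS_def)
  have sub: "\<And>r c. (r,c) \<in> dg n \<nu> \<Longrightarrow> (r,c) \<in> dg n s" using nule by (auto dest: order.strict_trans2)
  let ?res = "\<lambda>T. restrict T (dg n \<nu>)"
  let ?ext = "\<lambda>T' p. if p \<in> dg n s then (if p \<in> dg n \<nu> then T' p else ?K) else undefined"
  have "(\<Sum>T\<in>?fib. W' X y n s T) = (\<Sum>T'\<in>FT ?K n \<nu>. (\<Prod>r<n. y ^ (s r - \<nu> r)) * W X n \<nu> T')"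
  proof (rule sum.reindex_bij_witness[where i="?ext" and j="?res"])
    fix T assume T: "T \<in> ?fib"
    hence TF: "T \<in> OT n s" and ch: "\<And>r c. r < n \<Longrightarrow> c < s r \<Longrightarrow> (T (r,c) < ?K \<longleftrightarrow> c < \<nu> r)" by auto
    have PE: "T \<in> dg n s \<rightarrow>\<^sub>E {..<Suc ?K}" using TF by (simp add: OT_def)
    show "?ext (?res T) = T"
    proof
      fix p
      show "?ext (?res T) p = T p"
      proof (cases "p \<in> dg n s")
        case True
        obtain r c where p: "p = (r,c)" by force
        show ?thesis
        proof (cases "p \<in> dg n \<nu>")
          case False
          hence "\<not> T (r,c) < ?K" using ch True p by auto
          moreover have "T (r,c) < Suc ?K" using PE True p by auto
          ultimately show ?thesis using True False p by simp
        qed (use True in simp)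
      next
        case False thus ?thesis using PiE_arb[OF PE False] by simp
      qed
    qed
    show "?res T \<in> FT ?K n \<nu>"
    proof -
      have "?res T \<in> dg n \<nu> \<rightarrow>\<^sub>E {..<?K}"
      proof (rule PiE_I)
        fix p assume p: "p \<in> dg n \<nu>"
        obtain r c where pe: "p = (r,c)" by force
        have r: "r < n" and c: "c < \<nu> r" using p pe by auto
        have "c < s r" using c nule[OF r] by simp
        hence "T (r,c) < ?K" using ch[OF r] c by simp
        thus "?res T p \<in> {..<?K}" using p pe by simp
      qed simp
      moreover have "\<forall>r c. (r,c) \<in> dg n \<nu> \<and> (r, Suc c) \<in> dg n \<nu> \<longrightarrow> ?res T (r,c) \<le> ?res T (r, Suc c)"
        using TF sub by (auto simp: OT_def simp del: dg_iff)
      moreover have "\<forall>r c. (r,c) \<in> dg n \<nu> \<and> (Suc r, c) \<in> dg n \<nu> \<longrightarrow> ?res T (r,c) < ?res T (Suc r, c)"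
      proof (intro allI impI)
        fix r c assume rc: "(r,c) \<in> dg n \<nu> \<and> (Suc r, c) \<in> dg n \<nu>"
        have r: "r < n" and c1: "c < \<nu> r" and c2: "c < \<nu> (Suc r)" and r1: "Suc r < n" using rc by auto
        have "c < s r" using c1 nule[OF r] by simp
        hence a1: "T (r,c) < ?K" using ch[OF r] c1 by simp
        have "c < s (Suc r)" using c2 nule[OF r1] by simp
        hence "T (Suc r,c) < ?K" using ch[OF r1] c2 by simp
        note a1 this
        thus "?res T (r,c) < ?res T (Suc r, c)" using TF sub rc by (auto simp: OT_def simp del: dg_iff)
      qed
      moreover have "\<forall>r c. (r,c) \<in> dg n \<nu> \<longrightarrow> 2*r \<le> ?res T (r,c)"
      proof (intro allI impI)
        fix r c assume rc: "(r,c) \<in> dg n \<nu>"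
        have r: "r < n" and c1: "c < \<nu> r" using rc by auto
        have "c < s r" using c1 nule[OF r] by simp
        hence "T (r,c) < ?K" using ch[OF r] c1 by simp
        thus "2*r \<le> ?res T (r,c)" using TF sub rc by (auto simp: OT_def simp del: dg_iff)
      qed
      ultimately show ?thesis by (simp add: FT_def)
    qed
    show "(\<Prod>r<n. y ^ (s r - \<nu> r)) * W X n \<nu> (?res T) = W' X y n s T"
    proof -
      have "W' X y n s T = (\<Prod>r<n. (\<Prod>c<\<nu> r. wt X (T (r,c))) * y ^ (s r - \<nu> r))"
        unfolding W'_def
      proof (rule prod.cong[OF refl])
        fix r assume r: "r \<in> {..<n}"
        have "(\<Prod>c<s r. wt' X y n (T (r,c))) = (\<Prod>c\<in>{0..<\<nu> r}. wt' X y n (T (r,c))) * (\<Prod>c\<in>{\<nu> r..<s r}. wt' X y n (T (r,c)))"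
          using nule[of r] r by (simp add: prod.atLeastLessThan_concat lessThan_atLeast0)
        also have "(\<Prod>c\<in>{\<nu> r..<s r}. wt' X y n (T (r,c))) = (\<Prod>c\<in>{\<nu> r..<s r}. y)"
        proof (rule prod.cong[OF refl])
          fix c assume c: "c \<in> {\<nu> r..<s r}"
          hence "\<not> T (r,c) < ?K" using ch r by auto
          moreover have "T (r,c) < Suc ?K" using PE c r by auto
          ultimately show "wt' X y n (T (r,c)) = y" by (simp add: wt'_def less_Suc_eq)
        qed
        also have "(\<Prod>c\<in>{0..<\<nu> r}. wt' X y n (T (r,c))) = (\<Prod>c\<in>{0..<\<nu> r}. wt X (T (r,c)))"
        proof (rule prod.cong[OF refl])
          fix c assume c: "c \<in> {0..<\<nu> r}"
          hence "T (r,c) < ?K" using ch r nule[of r] by auto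
          thus "wt' X y n (T (r,c)) = wt X (T (r,c))" by (simp add: wt'_def)
        qed
        also have "(\<Prod>c\<in>{\<nu> r..<s r}. y) = y ^ (s r - \<nu> r)" by simp
        finally show "(\<Prod>c<s r. wt' X y n (T (r,c))) = (\<Prod>c<\<nu> r. wt X (T (r,c))) * y ^ (s r - \<nu> r)"
          by (simp add: lessThan_atLeast0)
      qed
      also have "\<dots> = (\<Prod>r<n. y ^ (s r - \<nu> r)) * W X n \<nu> (?res T)"
        by (simp add: W_def prod.distrib mult_ac)
      finally show ?thesis by simp
    qed
  next
    fix T' assume T': "T' \<in> FT ?K n \<nu>"
    have PE: "T' \<in> dg n \<nu> \<rightarrow>\<^sub>E {..<?K}" using T' by (simp add: FT_def)
    show "?res (?ext T') = T'"
    proof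
      fix p show "?res (?ext T') p = T' p"
        using PE sub by (cases p) (auto simp: PiE_def extensional_def simp del: dg_iff)
    qed
    show "?ext T' \<in> ?fib"
    proof -
      have A: "?ext T' \<in> dg n s \<rightarrow>\<^sub>E {..<Suc ?K}" using PE by (auto simp: PiE_def extensional_def Pi_def less_Suc_eq)
      have B: "\<forall>r c. (r,c) \<in> dg n s \<and> (r, Suc c) \<in> dg n s \<longrightarrow> ?ext T' (r,c) \<le> ?ext T' (r, Suc c) \<and> \<not> (?ext T' (r,c) = ?K \<and> ?ext T' (r, Suc c) = ?K)"
      proof (intro allI impI conjI)
        fix r c assume rc: "(r,c) \<in> dg n s \<and> (r, Suc c) \<in> dg n s"
        show "?ext T' (r,c) \<le> ?ext T' (r, Suc c)"
        proof (cases "(r, Suc c) \<in> dg n \<nu>")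
          case True
          hence "(r,c) \<in> dg n \<nu>" by simp
          thus ?thesis using True rc T' by (auto simp: FT_def simp del: dg_iff)
        next
          case False
          thus ?thesis using rc PE by (auto simp: PiE_def Pi_def less_imp_le simp del: dg_iff)
        qed
        show "\<not> (?ext T' (r,c) = ?K \<and> ?ext T' (r, Suc c) = ?K)"
        proof
          assume a: "?ext T' (r,c) = ?K \<and> ?ext T' (r, Suc c) = ?K"
          have "(r,c) \<notin> dg n \<nu>"
          proof
            assume "(r,c) \<in> dg n \<nu>"
            hence "T' (r,c) < ?K" using PE by auto
            thus False using a rc \<open>(r,c) \<in> dg n \<nu>\<close> by simp
          qed
          hence "\<nu> r \<le> c" using rc by auto
          moreover have "Suc c < s r" "r < n" using rc by auto
          ultimately show False using snu[of r] by simp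
        qed
      qed
      have C: "\<forall>r c. (r,c) \<in> dg n s \<and> (Suc r, c) \<in> dg n s \<longrightarrow> ?ext T' (r,c) \<le> ?ext T' (Suc r, c) \<and> (?ext T' (r,c) < ?K \<and> ?ext T' (Suc r, c) < ?K \<longrightarrow> ?ext T' (r,c) < ?ext T' (Suc r, c))"
      proof (intro allI impI)
        fix r c assume rc: "(r,c) \<in> dg n s \<and> (Suc r, c) \<in> dg n s"
        hence r: "r < n" by auto
        show "?ext T' (r,c) \<le> ?ext T' (Suc r, c) \<and> (?ext T' (r,c) < ?K \<and> ?ext T' (Suc r, c) < ?K \<longrightarrow> ?ext T' (r,c) < ?ext T' (Suc r, c))"
        proof (cases "(Suc r, c) \<in> dg n \<nu>")
          case True
          hence "c < \<nu> r" using numono[OF r] by auto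
          hence inr: "(r,c) \<in> dg n \<nu>" using r by simp
          have "T' (r,c) < T' (Suc r, c)" using True inr T' by (auto simp: FT_def simp del: dg_iff)
          thus ?thesis using True inr rc by simp
        next
          case False
          have "?ext T' (r,c) \<le> ?K" using rc PE by (auto simp: PiE_def Pi_def less_imp_le simp del: dg_iff)
          thus ?thesis using False rc by simp
        qed
      qed
      have D: "\<forall>r c. (r,c) \<in> dg n s \<and> ?ext T' (r,c) < ?K \<longrightarrow> 2*r \<le> ?ext T' (r,c)"
      proof (intro allI impI)
        fix r c assume rc: "(r,c) \<in> dg n s \<and> ?ext T' (r,c) < ?K"
        hence "(r,c) \<in> dg n \<nu>" by (cases "(r,c) \<in> dg n \<nu>") auto
        thus "2*r \<le> ?ext T' (r,c)" using rc T' by (auto simp: FT_def simp del: dg_iff)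
      qed
      have E: "\<forall>r<n. \<forall>c<s r. (?ext T' (r,c) < ?K \<longleftrightarrow> c < \<nu> r)"
        using PE by (auto simp: PiE_def Pi_def)
      show ?thesis using A B C D E by (simp add: OT_def)
    qed
  qed
  also have "\<dots> = (\<Prod>r<n. y ^ (s r - \<nu> r)) * SP X ?K n \<nu>"
    by (simp add: SP_def sum_distrib_left)
  finally show ?thesis .
qed




lemma V:
  fixes X :: "nat \<Rightarrow> 'a::field"
  assumes mono: "\<And>r. s (Suc r) \<le> s r" and s0: "\<And>r. n \<le> r \<Longrightarrow> s r = 0"
  shows "(\<Sum>T\<in>OT n s. W' X y n s T) = (\<Sum>\<nu>\<in>VS n s. (\<Prod>r<n. y ^ (s r - \<nu> r)) * SP X (2*n) n \<nu>)"
proof -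
  let ?K = "2*n"
  define fib where "fib \<nu> = {T\<in>OT n s. \<forall>r<n. \<forall>c<s r. (T (r,c) < ?K \<longleftrightarrow> c < \<nu> r)}" for \<nu>
  have cover: "OT n s = (\<Union>\<nu>\<in>VS n s. fib \<nu>)"
  proof
    show "(\<Union>\<nu>\<in>VS n s. fib \<nu>) \<subseteq> OT n s" by (auto simp: fib_def)
  next
    show "OT n s \<subseteq> (\<Union>\<nu>\<in>VS n s. fib \<nu>)"
    proof
      fix T assume T: "T \<in> OT n s"
      have PE: "T \<in> dg n s \<rightarrow>\<^sub>E {..<Suc ?K}" using T by (simp add: OT_def)
      have rstep: "\<And>r c. (r,c) \<in> dg n s \<Longrightarrow> (r, Suc c) \<in> dg n s \<Longrightarrow> T (r,c) \<le> T (r, Suc c)"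
        using T by (auto simp: OT_def simp del: dg_iff)
      define \<nu> where "\<nu> r = (if r < n then (LEAST c. c = s r \<or> ?K \<le> T (r,c)) else 0)" for r
      have nule: "\<nu> r \<le> s r" if "r < n" for r
        using that by (auto simp: \<nu>_def intro: Least_le)
      have ch: "T (r,c) < ?K \<longleftrightarrow> c < \<nu> r" if r: "r < n" and c: "c < s r" for r c
      proof
        assume lt: "T (r,c) < ?K"
        show "c < \<nu> r"
        proof (rule ccontr)
          assume "\<not> c < \<nu> r"
          hence le: "\<nu> r \<le> c" by simp
          have "\<nu> r = s r \<or> ?K \<le> T (r, \<nu> r)"
            using r LeastI[of "\<lambda>c. c = s r \<or> ?K \<le> T (r,c)" "s r"] by (simp add: \<nu>_def)
          hence "?K \<le> T (r, \<nu> r)" using le c by auto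
          also have "T (r, \<nu> r) \<le> T (r,c)" by (rule row_mono_gen[OF rstep]) (use r c le in auto)
          finally show False using lt by simp
        qed
      next
        assume "c < \<nu> r"
        hence "\<not> (c = s r \<or> ?K \<le> T (r,c))"
          using r not_less_Least[of c "\<lambda>c. c = s r \<or> ?K \<le> T (r,c)"] by (simp add: \<nu>_def)
        thus "T (r,c) < ?K" by simp
      qed
      have "\<nu> \<in> VS n s"
        unfolding VS_def
      proof (intro CollectI conjI allI impI)
        fix r assume r: "r < n"
        show "\<nu> r \<le> s r" by (rule nule[OF r])
        show "s r \<le> Suc (\<nu> r)"
        proof (rule ccontr)
          assume "\<not> s r \<le> Suc (\<nu> r)"
          hence c2: "Suc (\<nu> r) < s r" by simp
          hence c1: "\<nu> r < s r" by simp
          have "\<not> T (r, \<nu> r) < ?K" using ch[OF r c1] by simp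
          moreover have "T (r, \<nu> r) < Suc ?K" using PE r c1 by auto
          moreover have "\<not> T (r, Suc (\<nu> r)) < ?K" using ch[OF r c2] by simp
          moreover have "T (r, Suc (\<nu> r)) < Suc ?K" using PE r c2 by auto
          moreover have "\<not> (T (r, \<nu> r) = ?K \<and> T (r, Suc (\<nu> r)) = ?K)" using T r c1 c2 by (auto simp: OT_def)
          ultimately show False by (simp add: less_Suc_eq)
        qed
        show "\<nu> (Suc r) \<le> \<nu> r"
        proof (cases "Suc r < n")
          case False thus ?thesis by (simp add: \<nu>_def)
        next
          case True
          show ?thesis
          proof (rule ccontr)
            assume "\<not> \<nu> (Suc r) \<le> \<nu> r"
            hence c1: "\<nu> r < \<nu> (Suc r)" by simp
            hence c1': "\<nu> r < s (Suc r)" using nule[OF True] by simp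
            hence c2: "\<nu> r < s r" using mono[of r] by simp
            have "T (Suc r, \<nu> r) < ?K" using ch[OF True c1'] c1 by simp
            moreover have "T (r, \<nu> r) \<le> T (Suc r, \<nu> r)" using T True c1' c2 r by (auto simp: OT_def)
            ultimately have "T (r, \<nu> r) < ?K" by simp
            with ch[OF r c2] show False by simp
          qed
        qed
      next
        fix r assume "n \<le> r" thus "\<nu> r = 0" by (simp add: \<nu>_def)
      qed
      moreover have "T \<in> fib \<nu>" using T ch by (auto simp: fib_def)
      ultimately show "T \<in> (\<Union>\<nu>\<in>VS n s. fib \<nu>)" by blast
    qed
  qed
  have disj: "fib \<mu> \<inter> fib \<mu>' = {}" if mu: "\<mu> \<in> VS n s" and mu': "\<mu>' \<in> VS n s" and ne: "\<mu> \<noteq> \<mu>'" for \<mu> \<mu>'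
  proof (rule ccontr)
    assume "fib \<mu> \<inter> fib \<mu>' \<noteq> {}"
    then obtain T where T1: "T \<in> fib \<mu>" and T2: "T \<in> fib \<mu>'" by blast
    have "\<mu> = \<mu>'"
    proof
      fix r show "\<mu> r = \<mu>' r"
      proof (cases "r < n")
        case False thus ?thesis using mu mu' by (auto simp: VS_def)
      next
        case True
        have a: "\<mu> r \<le> s r" "\<mu>' r \<le> s r" using mu mu' True by (auto simp: VS_def)
        have b: "\<And>c. c < s r \<Longrightarrow> (c < \<mu> r \<longleftrightarrow> c < \<mu>' r)" using T1 T2 True by (auto simp: fib_def)
        show ?thesis
        proof (rule ccontr)
          assume "\<mu> r \<noteq> \<mu>' r"
          hence "\<mu> r < \<mu>' r \<or> \<mu>' r < \<mu> r" by auto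
          thus False
          proof
            assume "\<mu> r < \<mu>' r" thus False using b[of "\<mu> r"] a by simp
          next
            assume "\<mu>' r < \<mu> r" thus False using b[of "\<mu>' r"] a by simp
          qed
        qed
      qed
    qed
    thus False using ne by simp
  qed
  have "(\<Sum>T\<in>OT n s. W' X y n s T) = (\<Sum>T\<in>(\<Union>\<nu>\<in>VS n s. fib \<nu>). W' X y n s T)" by (simp add: cover[symmetric])
  also have "\<dots> = (\<Sum>\<nu>\<in>VS n s. \<Sum>T\<in>fib \<nu>. W' X y n s T)"
  proof (rule sum.UNION_disjoint[OF finite_VS])
    show "\<forall>\<nu>\<in>VS n s. finite (fib \<nu>)" by (auto simp: fib_def)
    show "\<forall>\<nu>\<in>VS n s. \<forall>\<nu>'\<in>VS n s. \<nu> \<noteq> \<nu>' \<longrightarrow> fib \<nu> \<inter> fib \<nu>' = {}" using disj by blast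
  qed
  also have "\<dots> = (\<Sum>\<nu>\<in>VS n s. (\<Prod>r<n. y ^ (s r - \<nu> r)) * SP X (2*n) n \<nu>)"
    by (intro sum.cong refl) (unfold fib_def, rule fiberV)
  finally show ?thesis .
qed




definition goodE :: "nat \<Rightarrow> (nat \<Rightarrow> nat) \<Rightarrow> (nat \<Rightarrow> nat) \<Rightarrow> bool" where
  "goodE n s \<epsilon> \<longleftrightarrow> (\<forall>j<n. \<epsilon> j = 1 \<longrightarrow> (if Suc j < n then \<epsilon> (Suc j) = 1 \<or> s (Suc j) < s j else 0 < s j))"

lemma goodE_le:
  assumes g: "goodE n s \<epsilon>" and mono: "\<And>r. s (Suc r) \<le> s r" and e: "\<epsilon> j = 1" and j: "j < n"
  shows "0 < s j"
  using e j
proof (induct "n - Suc j" arbitrary: j)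
  case 0
  hence "\<not> Suc j < n" by simp
  thus ?case using g 0 by (auto simp: goodE_def)
next
  case (Suc d)
  hence sj: "Suc j < n" by simp
  have "if Suc j < n then \<epsilon> (Suc j) = 1 \<or> s (Suc j) < s j else 0 < s j"
    using g Suc.prems unfolding goodE_def by blast
  hence "\<epsilon> (Suc j) = 1 \<or> s (Suc j) < s j" using sj by (simp only: if_True)
  thus ?case
  proof
    assume a: "\<epsilon> (Suc j) = 1"
    have "0 < s (Suc j)" by (rule Suc.hyps) (use Suc.hyps(2) a sj in auto)
    thus ?thesis using mono[of j] by simp
  qed simp
qed

lemma det_zero_col:
  fixes f :: "nat \<times> nat \<Rightarrow> 'a::comm_ring_1"
  assumes j: "j < n" and z: "\<And>i. i < n \<Longrightarrow> f (i,j) = 0"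
  shows "det (mat n n f) = 0"
proof -
  have "det (mat n n f) = (\<Sum>i<n. mat n n f $$ (i,j) * cofactor (mat n n f) i j)"
    by (rule laplace_expansion_column[OF _ j]) simp
  also have "\<dots> = 0" using z j by simp
  finally show ?thesis .
qed

lemma det_eq_cols:
  fixes f :: "nat \<times> nat \<Rightarrow> 'a::comm_ring_1"
  assumes j: "Suc j < n" and z: "\<And>i. i < n \<Longrightarrow> f (i,j) = f (i, Suc j)"
  shows "det (mat n n f) = 0"
  by (rule det_identical_columns[of _ n j "Suc j"]) (use j z in \<open>auto simp: col_def\<close>)

lemma detY:
  fixes X :: "nat \<Rightarrow> 'a::field"
  assumes mono: "\<And>r. s (Suc r) \<le> s r"
  shows "det (mat n n (\<lambda>(i,j). Fp (s j + n - j) (X i) + y * Fp (s j + n - j - 1) (X i)))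
     = (\<Sum>\<nu>\<in>VS n s. (\<Prod>r<n. y^(s r - \<nu> r)) * Adet X n \<nu>)"
proof -
  let ?E = "PiE {0..<n} (\<lambda>_. {0::nat,1})"
  let ?B = "\<lambda>\<epsilon>. det (mat n n (\<lambda>(i,j). Fp (s j + n - j - \<epsilon> j) (X i)))"
  let ?G = "{\<epsilon>\<in>?E. goodE n s \<epsilon>}"
  have "det (mat n n (\<lambda>(i,j). Fp (s j + n - j) (X i) + y * Fp (s j + n - j - 1) (X i))) =
     det (mat n n (\<lambda>(i,j). \<Sum>e\<in>{0::nat,1}. y^e * Fp (s j + n - j - e) (X i)))"
    by (rule det_mat_cong) simp
  also have "\<dots> = (\<Sum>\<epsilon>\<in>?E. det (mat n n (\<lambda>(i,j). y^(\<epsilon> j) * Fp (s j + n - j - \<epsilon> j) (X i))))"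
    by (rule det_cols_sum) simp
  also have "\<dots> = (\<Sum>\<epsilon>\<in>?E. (\<Prod>j<n. y^(\<epsilon> j)) * ?B \<epsilon>)"
    by (intro sum.cong refl det_cols_scale)
  also have "\<dots> = (\<Sum>\<epsilon>\<in>?G. (\<Prod>j<n. y^(\<epsilon> j)) * ?B \<epsilon>)"
  proof (rule sum.mono_neutral_right)
    show "finite ?E" by (rule finite_PiE) auto
    show "?G \<subseteq> ?E" by auto
    show "\<forall>\<epsilon>\<in>?E - ?G. (\<Prod>j<n. y^(\<epsilon> j)) * ?B \<epsilon> = 0"
    proof
      fix \<epsilon> assume e: "\<epsilon> \<in> ?E - ?G"
      then obtain j where j: "j < n" and ej: "\<epsilon> j = 1"
        and bad: "\<not> (if Suc j < n then \<epsilon> (Suc j) = 1 \<or> s (Suc j) < s j else 0 < s j)"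
        by (auto simp: goodE_def)
      have "?B \<epsilon> = 0"
      proof (cases "Suc j < n")
        case True
        have e1: "\<epsilon> (Suc j) = 0" using bad True e by auto
        have sj: "s (Suc j) = s j" using bad True mono[of j] by auto
        show ?thesis
          by (rule det_eq_cols[OF True]) (use ej e1 sj True in simp)
      next
        case False
        hence "s j = 0" "Suc j = n" using bad j by auto
        show ?thesis
          by (rule det_zero_col[OF j]) (use ej \<open>s j = 0\<close> \<open>Suc j = n\<close> in simp)
      qed
      thus "(\<Prod>j<n. y^(\<epsilon> j)) * ?B \<epsilon> = 0" by simp
    qed
  qed
  also have "\<dots> = (\<Sum>\<nu>\<in>VS n s. (\<Prod>r<n. y^(s r - \<nu> r)) * Adet X n \<nu>)"
  proof (rule sum.reindex_bij_witness[where j="\<lambda>\<epsilon> r. if r < n then s r - \<epsilon> r else 0"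
                                       and i="\<lambda>\<nu>. restrict (\<lambda>j. s j - \<nu> j) {0..<n}"])
    fix \<epsilon> assume e: "\<epsilon> \<in> ?G"
    have le: "\<epsilon> j \<le> s j" if j: "j < n" for j
    proof -
      have "\<epsilon> j \<in> {0,1}" using e j by auto
      thus ?thesis using goodE_le[of n s \<epsilon> j] e mono j by auto
    qed
    show "restrict (\<lambda>j. s j - (if j < n then s j - \<epsilon> j else 0)) {0..<n} = \<epsilon>"
    proof
      fix j show "restrict (\<lambda>j. s j - (if j < n then s j - \<epsilon> j else 0)) {0..<n} j = \<epsilon> j"
        using e le by (auto simp: PiE_def extensional_def)
    qed
    show "(\<lambda>r. if r < n then s r - \<epsilon> r else 0) \<in> VS n s"
      unfolding VS_def
    proof (intro CollectI conjI allI impI)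
      fix r assume r: "r < n"
      have er: "\<epsilon> r \<in> {0,1}" using e r by auto
      show "(if r < n then s r - \<epsilon> r else 0) \<le> s r" by simp
      show "s r \<le> Suc (if r < n then s r - \<epsilon> r else 0)" using er r by auto
      show "(if Suc r < n then s (Suc r) - \<epsilon> (Suc r) else 0) \<le> (if r < n then s r - \<epsilon> r else 0)"
      proof (cases "Suc r < n")
        case False thus ?thesis by simp
      next
        case True
        have er1: "\<epsilon> (Suc r) \<in> {0,1}" using e True by auto
        show ?thesis
        proof (cases "\<epsilon> r = 1")
          case False
          hence "\<epsilon> r = 0" using er by auto
          thus ?thesis using True r mono[of r] by auto
        next
          case ej: True
          have "if Suc r < n then \<epsilon> (Suc r) = 1 \<or> s (Suc r) < s r else 0 < s r"
            using e r ej unfolding goodE_def by blast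
          hence "\<epsilon> (Suc r) = 1 \<or> s (Suc r) < s r" using True by (simp only: if_True)
          thus ?thesis using True r ej er1 mono[of r] by auto
        qed
      qed
    next
      fix r assume "n \<le> r" thus "(if r < n then s r - \<epsilon> r else 0) = 0" by simp
    qed
    show "(\<Prod>r<n. y^(s r - (if r < n then s r - \<epsilon> r else 0))) * Adet X n (\<lambda>r. if r < n then s r - \<epsilon> r else 0) =
       (\<Prod>j<n. y^(\<epsilon> j)) * ?B \<epsilon>"
    proof -
      have "(\<Prod>r<n. y^(s r - (if r < n then s r - \<epsilon> r else 0))) = (\<Prod>j<n. y^(\<epsilon> j))"
        by (intro prod.cong refl) (use le in auto)
      moreover have "Adet X n (\<lambda>r. if r < n then s r - \<epsilon> r else 0) = ?B \<epsilon>"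
        unfolding Adet_def by (rule det_mat_cong) (use le in \<open>auto simp: add.commute\<close>)
      ultimately show ?thesis by simp
    qed
  next
    fix \<nu> assume nu: "\<nu> \<in> VS n s"
    have a: "\<And>r. r < n \<Longrightarrow> \<nu> r \<le> s r" "\<And>r. r < n \<Longrightarrow> s r \<le> Suc (\<nu> r)" "\<And>r. r < n \<Longrightarrow> \<nu> (Suc r) \<le> \<nu> r"
      "\<And>r. n \<le> r \<Longrightarrow> \<nu> r = 0"
      using nu by (auto simp: VS_def)
    show "(\<lambda>r. if r < n then s r - restrict (\<lambda>j. s j - \<nu> j) {0..<n} r else 0) = \<nu>"
      using a by (auto simp: fun_eq_iff)
    show "restrict (\<lambda>j. s j - \<nu> j) {0..<n} \<in> ?G"
    proof (intro CollectI conjI)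
      show "restrict (\<lambda>j. s j - \<nu> j) {0..<n} \<in> ?E"
      proof (rule PiE_I)
        fix j assume "j \<in> {0..<n}"
        hence "\<nu> j \<le> s j" "s j \<le> Suc (\<nu> j)" using a by auto
        hence "s j - \<nu> j = 0 \<or> s j - \<nu> j = 1" by arith
        thus "restrict (\<lambda>j. s j - \<nu> j) {0..<n} j \<in> {0,1}" using \<open>j \<in> {0..<n}\<close> by auto
      qed simp
      show "goodE n s (restrict (\<lambda>j. s j - \<nu> j) {0..<n})"
        unfolding goodE_def
      proof (intro allI impI)
        fix j assume j: "j < n" and e1: "restrict (\<lambda>j. s j - \<nu> j) {0..<n} j = 1"
        hence sj: "s j = Suc (\<nu> j)" using a(1)[OF j] by auto
        show "if Suc j < n then restrict (\<lambda>j. s j - \<nu> j) {0..<n} (Suc j) = 1 \<or> s (Suc j) < s j else 0 < s j"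
        proof (cases "Suc j < n")
          case True
          have "s (Suc j) - \<nu> (Suc j) = 1 \<or> s (Suc j) < s j"
          proof (cases "s (Suc j) - \<nu> (Suc j) = 1")
            case False
            hence "s (Suc j) = \<nu> (Suc j)" using a(1)[OF True] a(2)[OF True] by arith
            thus ?thesis using a(3)[OF j] sj by simp
          qed simp
          thus ?thesis using True by simp
        qed (use sj in simp)
      qed
    qed
  qed
  finally show ?thesis .
qed




definition dec :: "nat \<Rightarrow> nat \<Rightarrow> ospent" where
  "dec n k = (if k = 2*n then Pr 1 else if even k then Unb (k div 2 + 1) else Bar (k div 2 + 1))"

definition gw :: "(nat \<Rightarrow> 'a::field) \<Rightarrow> 'a \<Rightarrow> ospent \<Rightarrow> 'a" where
  "gw x y e = (case e of Unb i \<Rightarrow> x i | Bar i \<Rightarrow> inverse (x i) | Pr j \<Rightarrow> y)"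

lemma entries_cases:
  assumes "e \<in> osp_entries n 1"
  obtains (U) i where "1 \<le> i" "i \<le> n" "e = Unb i" | (B) i where "1 \<le> i" "i \<le> n" "e = Bar i" | (P) "e = Pr 1"
  using assms by (auto simp: osp_entries_def)

lemma E1: "e \<in> osp_entries n 1 \<Longrightarrow> 2 \<le> osp_key n e \<and> osp_key n e - 2 < Suc (2*n)"
  by (erule entries_cases) auto

lemma E2: "e \<in> osp_entries n 1 \<Longrightarrow> dec n (osp_key n e - 2) = e"
proof (erule entries_cases)
  fix i assume i: "1 \<le> i" "i \<le> n" "e = Unb i"
  have "osp_key n e - 2 = 2 * (i - 1)" using i by simp
  moreover have "2 * (i - 1) \<noteq> 2 * n" using i by simp
  ultimately show ?thesis using i by (simp add: dec_def)
next
  fix i assume i: "1 \<le> i" "i \<le> n" "e = Bar i"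
  have "osp_key n e - 2 = 2 * (i - 1) + 1" using i by simp
  moreover have "2 * (i - 1) + 1 \<noteq> 2 * n" by presburger
  ultimately show ?thesis using i by (simp add: dec_def)
qed (simp add: dec_def)

lemma E3: "k < Suc (2*n) \<Longrightarrow> dec n k \<in> osp_entries n 1 \<and> osp_key n (dec n k) = k + 2"
proof -
  assume k: "k < Suc (2*n)"
  show ?thesis
  proof (cases "k = 2*n")
    case True thus ?thesis by (simp add: dec_def osp_entries_def)
  next
    case False
    hence k2: "k < 2*n" using k by simp
    show ?thesis
    proof (cases "even k")
      case True
      then obtain i where i: "k = 2*i" by blast
      have "i < n" using k2 i by simp
      thus ?thesis using True i False by (simp add: dec_def osp_entries_def)
    next
      case odd: False
      then obtain i where i: "k = 2*i + 1" using oddE by blast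
      have "i < n" using k2 i by simp
      thus ?thesis using odd i False by (simp add: dec_def osp_entries_def)
    qed
  qed
qed

lemma E4: "e \<in> osp_entries n 1 \<Longrightarrow> is_primed e \<longleftrightarrow> osp_key n e - 2 = 2*n"
  by (erule entries_cases) auto

lemma E5: "e \<in> osp_entries n 1 \<Longrightarrow> \<not> is_primed e \<Longrightarrow> (Suc r \<le> sym_index e \<longleftrightarrow> 2*r \<le> osp_key n e - 2)"
  by (erule entries_cases) auto

lemma E6: "e \<in> osp_entries n 1 \<Longrightarrow> wt' (\<lambda>i. x (Suc i)) y n (osp_key n e - 2) = gw x y e"
proof (erule entries_cases)
  fix i assume i: "1 \<le> i" "i \<le> n" "e = Unb i"
  have "osp_key n e - 2 = 2 * (i - 1)" using i by simp
  moreover have "2 * (i - 1) \<noteq> 2 * n" using i by simp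
  ultimately show ?thesis using i by (simp add: wt'_def wt_def gw_def)
next
  fix i assume i: "1 \<le> i" "i \<le> n" "e = Bar i"
  have "osp_key n e - 2 = 2 * (i - 1) + 1" using i by simp
  moreover have "2 * (i - 1) + 1 \<noteq> 2 * n" by presburger
  ultimately show ?thesis using i by (simp add: wt'_def wt_def gw_def)
qed (simp add: wt'_def gw_def)

lemma prod_fibers:
  assumes A: "finite A" and E: "finite E" and TE: "T ` A \<subseteq> E"
  shows "(\<Prod>p\<in>A. g (T p)) = (\<Prod>e\<in>E. g e ^ card {p\<in>A. T p = e})"
proof -
  have "(\<Prod>p\<in>A. g (T p)) = (\<Prod>e\<in>E. \<Prod>p\<in>{p. p \<in> A \<and> T p = e}. g (T p))"
    by (rule prod.group[symmetric, OF A E TE])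
  also have "\<dots> = (\<Prod>e\<in>E. g e ^ card {p\<in>A. T p = e})"
    by (intro prod.cong refl) simp
  finally show ?thesis .
qed

lemma finite_entries[simp]: "finite (osp_entries n m)" by (simp add: osp_entries_def)

lemma weight_eq:
  fixes x :: "nat \<Rightarrow> 'a::field"
  assumes T: "T ` diagram lam \<subseteq> osp_entries n 1" and fin: "finite (diagram lam)"
  shows "osp_weight n 1 lam x (\<lambda>_. y) T = (\<Prod>p\<in>diagram lam. gw x y (T p))"
proof -
  let ?A = "Unb ` {1..n}" and ?B = "Bar ` {1..n}" and ?C = "Pr ` {1..1}"
  let ?G = "\<lambda>e. gw x y e ^ osp_count lam T e"
  have "(\<Prod>p\<in>diagram lam. gw x y (T p)) = (\<Prod>e\<in>osp_entries n 1. ?G e)"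
    unfolding osp_count_def by (rule prod_fibers[OF fin finite_entries T])
  also have "osp_entries n 1 = ?A \<union> ?B \<union> ?C" by (simp add: osp_entries_def)
  also have "(\<Prod>e\<in>?A \<union> ?B \<union> ?C. ?G e) = (\<Prod>e\<in>?A. ?G e) * (\<Prod>e\<in>?B. ?G e) * (\<Prod>e\<in>?C. ?G e)"
  proof -
    have "(\<Prod>e\<in>?A \<union> ?B \<union> ?C. ?G e) = (\<Prod>e\<in>?A \<union> ?B. ?G e) * (\<Prod>e\<in>?C. ?G e)"
      by (rule prod.union_disjoint) auto
    moreover have "(\<Prod>e\<in>?A \<union> ?B. ?G e) = (\<Prod>e\<in>?A. ?G e) * (\<Prod>e\<in>?B. ?G e)"
      by (rule prod.union_disjoint) auto
    ultimately show ?thesis by simp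
  qed
  also have "(\<Prod>e\<in>?A. ?G e) = (\<Prod>i\<in>{1..n}. x i ^ osp_count lam T (Unb i))"
    by (subst prod.reindex) (auto simp: inj_on_def gw_def)
  also have "(\<Prod>e\<in>?B. ?G e) = (\<Prod>i\<in>{1..n}. inverse (x i) ^ osp_count lam T (Bar i))"
    by (subst prod.reindex) (auto simp: inj_on_def gw_def)
  also have "(\<Prod>e\<in>?C. ?G e) = (\<Prod>j\<in>{1..1}. y ^ osp_count lam T (Pr j))"
    by (simp add: gw_def)
  finally show ?thesis by (simp add: osp_weight_def prod.distrib)
qed




lemma translate:
  fixes x :: "nat \<Rightarrow> 'a::field"
  assumes len: "length lam = n"
  shows "spo n 1 lam x (\<lambda>_. y) = (\<Sum>U\<in>OT n (\<lambda>r. if r < n then lam ! r else 0). W' (\<lambda>i. x (Suc i)) y n (\<lambda>r. if r < n then lam ! r else 0) U)"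
proof -
  define s where "s = (\<lambda>r. if r < n then lam ! r else 0)"
  define X where "X = (\<lambda>i. x (Suc i))"
  have dgeq: "diagram lam = dg n s" by (auto simp: diagram_def len s_def)
  let ?phi = "\<lambda>T p. if p \<in> dg n s then osp_key n (T p) - 2 else undefined"
  let ?psi = "\<lambda>U p. if p \<in> dg n s then dec n (U p) else undefined"
  have "spo n 1 lam x (\<lambda>_. y) = (\<Sum>T\<in>{T. is_osp_tableau n 1 lam T}. osp_weight n 1 lam x (\<lambda>_. y) T)"
    by (simp add: spo_def)
  also have "\<dots> = (\<Sum>U\<in>OT n s. W' X y n s U)"
  proof (rule sum.reindex_bij_witness[where j="?phi" and i="?psi"])
    fix T assume "T \<in> {T. is_osp_tableau n 1 lam T}"
    hence tab: "is_osp_tableau n 1 lam T" by simp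
    have PE: "T \<in> dg n s \<rightarrow>\<^sub>E osp_entries n 1" using tab by (simp add: is_osp_tableau_def dgeq)
    have ent: "\<And>p. p \<in> dg n s \<Longrightarrow> T p \<in> osp_entries n 1" using PE by auto
    have rowc: "\<And>r c. (r,c) \<in> dg n s \<Longrightarrow> (r, Suc c) \<in> dg n s \<Longrightarrow>
        osp_key n (T (r, c)) \<le> osp_key n (T (r, Suc c)) \<and>
        (is_primed (T (r, c)) \<and> is_primed (T (r, Suc c)) \<longrightarrow> osp_key n (T (r, c)) < osp_key n (T (r, Suc c)))"
      using tab unfolding is_osp_tableau_def dgeq by blast
    have colc: "\<And>r c. (r,c) \<in> dg n s \<Longrightarrow> (Suc r, c) \<in> dg n s \<Longrightarrow>
        osp_key n (T (r, c)) \<le> osp_key n (T (Suc r, c)) \<and>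
        (\<not> is_primed (T (r, c)) \<and> \<not> is_primed (T (Suc r, c)) \<longrightarrow> osp_key n (T (r, c)) < osp_key n (T (Suc r, c)))"
      using tab unfolding is_osp_tableau_def dgeq by blast
    have flagc: "\<And>r c. (r,c) \<in> dg n s \<Longrightarrow> \<not> is_primed (T (r, c)) \<Longrightarrow> Suc r \<le> sym_index (T (r, c))"
      using tab unfolding is_osp_tableau_def dgeq by blast
    show "?psi (?phi T) = T"
    proof
      fix p show "?psi (?phi T) p = T p"
        using E2[OF ent[of p]] PiE_arb[OF PE, of p] by auto
    qed
    show "?phi T \<in> OT n s"
      unfolding OT_def
    proof (intro CollectI conjI allI impI)
      show "?phi T \<in> dg n s \<rightarrow>\<^sub>E {..<Suc (2*n)}" using E1 ent by auto
    next
      fix r c assume rc: "(r,c) \<in> dg n s \<and> (r, Suc c) \<in> dg n s"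
      have e1: "T (r,c) \<in> osp_entries n 1" "T (r, Suc c) \<in> osp_entries n 1" using ent rc by auto
      have k: "2 \<le> osp_key n (T (r,c))" "2 \<le> osp_key n (T (r,Suc c))" using E1 e1 by auto
      have R: "osp_key n (T (r, c)) \<le> osp_key n (T (r, Suc c)) \<and>
        (is_primed (T (r, c)) \<and> is_primed (T (r, Suc c)) \<longrightarrow> osp_key n (T (r, c)) < osp_key n (T (r, Suc c)))"
        using rowc rc by blast
      show "?phi T (r,c) \<le> ?phi T (r, Suc c)" using R rc by (simp add: diff_le_mono)
      show "\<not> (?phi T (r,c) = 2*n \<and> ?phi T (r, Suc c) = 2*n)"
      proof
        assume a: "?phi T (r,c) = 2*n \<and> ?phi T (r, Suc c) = 2*n"
        hence "is_primed (T (r,c))" "is_primed (T (r, Suc c))" using E4 e1 rc by auto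
        hence "osp_key n (T (r, c)) < osp_key n (T (r, Suc c))" using R by blast
        moreover have "osp_key n (T (r,c)) - 2 = 2*n" "osp_key n (T (r,Suc c)) - 2 = 2*n" using a rc by auto
        ultimately show False using k by linarith
      qed
    next
      fix r c assume rc: "(r,c) \<in> dg n s \<and> (Suc r, c) \<in> dg n s"
      have e1: "T (r,c) \<in> osp_entries n 1" "T (Suc r, c) \<in> osp_entries n 1" using ent rc by auto
      have k: "2 \<le> osp_key n (T (r,c))" "2 \<le> osp_key n (T (Suc r, c))" "osp_key n (T (r,c)) - 2 < Suc (2*n)"
        "osp_key n (T (Suc r,c)) - 2 < Suc (2*n)" using E1 e1 by auto
      have C: "osp_key n (T (r, c)) \<le> osp_key n (T (Suc r, c)) \<and>
        (\<not> is_primed (T (r, c)) \<and> \<not> is_primed (T (Suc r, c)) \<longrightarrow> osp_key n (T (r, c)) < osp_key n (T (Suc r, c)))"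
        using colc rc by blast
      show "?phi T (r,c) \<le> ?phi T (Suc r, c)" using C rc by (simp add: diff_le_mono)
      show "?phi T (r,c) < ?phi T (Suc r, c)" if a: "?phi T (r,c) < 2*n \<and> ?phi T (Suc r, c) < 2*n"
      proof -
        have "\<not> is_primed (T (r,c))" "\<not> is_primed (T (Suc r, c))" using E4 e1 rc a by auto
        hence "osp_key n (T (r, c)) < osp_key n (T (Suc r, c))" using C by blast
        thus "?phi T (r,c) < ?phi T (Suc r, c)" using rc k by simp
      qed
    next
      fix r c assume rc: "(r,c) \<in> dg n s \<and> ?phi T (r,c) < 2*n"
      have e1: "T (r,c) \<in> osp_entries n 1" using ent rc by auto
      hence np: "\<not> is_primed (T (r,c))" using E4 rc by auto
      hence "Suc r \<le> sym_index (T (r,c))" using flagc rc by blast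
      thus "2*r \<le> ?phi T (r,c)" using E5[OF e1 np] rc by simp
    qed
    show "W' X y n s (?phi T) = osp_weight n 1 lam x (\<lambda>_. y) T"
    proof -
      have "W' X y n s (?phi T) = (\<Prod>p\<in>dg n s. wt' X y n (?phi T p))"
        by (simp add: W'_def dg_def prod.Sigma)
      also have "\<dots> = (\<Prod>p\<in>dg n s. gw x y (T p))"
      proof (rule prod.cong[OF refl])
        fix p assume p: "p \<in> dg n s"
        show "wt' X y n (?phi T p) = gw x y (T p)" using E6[OF ent[OF p], of x y] p by (simp add: X_def)
      qed
      also have "\<dots> = osp_weight n 1 lam x (\<lambda>_. y) T"
      proof -
        have "osp_weight n 1 lam x (\<lambda>_. y) T = (\<Prod>p\<in>diagram lam. gw x y (T p))"
          by (rule weight_eq) (use ent dgeq in auto)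
        thus ?thesis by (simp add: dgeq)
      qed
      finally show ?thesis .
    qed
  next
    fix U assume U: "U \<in> OT n s"
    have PE: "U \<in> dg n s \<rightarrow>\<^sub>E {..<Suc (2*n)}" using U by (simp add: OT_def)
    have lt: "\<And>p. p \<in> dg n s \<Longrightarrow> U p < Suc (2*n)" using PE by auto
    show "?phi (?psi U) = U"
    proof
      fix p show "?phi (?psi U) p = U p"
        using E3[OF lt[of p]] PiE_arb[OF PE, of p] by auto
    qed
    have entd: "\<And>p. p \<in> dg n s \<Longrightarrow> dec n (U p) \<in> osp_entries n 1" and keyd: "\<And>p. p \<in> dg n s \<Longrightarrow> osp_key n (dec n (U p)) = U p + 2"
      using E3 lt by auto
    have prd: "\<And>p. p \<in> dg n s \<Longrightarrow> is_primed (dec n (U p)) \<longleftrightarrow> U p = 2*n"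
      using E4[OF entd] keyd by auto
    show "?psi U \<in> {T. is_osp_tableau n 1 lam T}"
      unfolding is_osp_tableau_def dgeq mem_Collect_eq
    proof (intro conjI allI impI)
      show "?psi U \<in> dg n s \<rightarrow>\<^sub>E osp_entries n 1" using entd by auto
    next
      fix r c assume rc: "(r,c) \<in> dg n s \<and> (r, Suc c) \<in> dg n s"
      have R: "U (r,c) \<le> U (r, Suc c) \<and> \<not> (U (r,c) = 2*n \<and> U (r, Suc c) = 2*n)"
        using U rc unfolding OT_def by blast
      show "osp_key n (?psi U (r,c)) \<le> osp_key n (?psi U (r, Suc c))" using R rc keyd by simp
      show "osp_key n (?psi U (r, c)) < osp_key n (?psi U (r, Suc c))"
        if "is_primed (?psi U (r, c)) \<and> is_primed (?psi U (r, Suc c))"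
        using R rc prd that by auto
    next
      fix r c assume rc: "(r,c) \<in> dg n s \<and> (Suc r, c) \<in> dg n s"
      have C: "U (r,c) \<le> U (Suc r, c) \<and> (U (r,c) < 2*n \<and> U (Suc r, c) < 2*n \<longrightarrow> U (r,c) < U (Suc r, c))"
        using U rc unfolding OT_def by blast
      have l: "U (r,c) < Suc (2*n)" "U (Suc r,c) < Suc (2*n)" using lt rc by auto
      show "osp_key n (?psi U (r,c)) \<le> osp_key n (?psi U (Suc r, c))" using C rc keyd by simp
      show "osp_key n (?psi U (r, c)) < osp_key n (?psi U (Suc r, c))"
        if a: "\<not> is_primed (?psi U (r, c)) \<and> \<not> is_primed (?psi U (Suc r, c))"
      proof -
        have "U (r,c) < 2*n" "U (Suc r, c) < 2*n" using a prd rc l by (auto simp: less_Suc_eq)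
        thus "osp_key n (?psi U (r, c)) < osp_key n (?psi U (Suc r, c))" using C rc keyd by simp
      qed
    next
      fix r c assume rc: "(r,c) \<in> dg n s \<and> \<not> is_primed (?psi U (r, c))"
      have l: "U (r,c) < Suc (2*n)" using lt rc by auto
      have np: "\<not> is_primed (dec n (U (r,c)))" using rc by (simp split: if_splits)
      have "U (r,c) \<noteq> 2*n" using prd[of "(r,c)"] rc np by blast
      hence u: "U (r,c) < 2*n" using l by simp
      hence "2*r \<le> U (r,c)" using U rc unfolding OT_def by blast
      moreover have rc1: "(r,c) \<in> dg n s" using rc by simp
      ultimately have "Suc r \<le> sym_index (dec n (U (r,c)))"
        using E5[OF entd[OF rc1] np] keyd[OF rc1] by simp
      thus "Suc r \<le> sym_index (?psi U (r, c))" using rc1 by simp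
    qed
  qed
  finally show ?thesis by (simp add: s_def X_def)
qed




lemma Dn_closed: "Dn X n = (\<Prod>i<n. X i - inverse (X i)) * (\<Prod>j<n. \<Prod>i<j. tt (X i) - tt (X j))"
  by (induct n) (simp_all add: mult_ac)

lemma D_eq:
  fixes x :: "nat \<Rightarrow> 'a::field"
  shows "(\<Prod>i\<in>{1..n}. x i - inverse (x i)) *
         (\<Prod>(i, j)\<in>{(i, j). 1 \<le> i \<and> i < j \<and> j \<le> n}. x i + inverse (x i) - x j - inverse (x j))
       = Dn (\<lambda>i. x (Suc i)) n"
proof -
  have s1: "{1..n} = Suc ` {..<n}"
  proof
    show "{1..n} \<subseteq> Suc ` {..<n}"
    proof
      fix i assume "i \<in> {1..n}"
      hence "i = Suc (i - 1)" "i - 1 < n" by auto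
      thus "i \<in> Suc ` {..<n}" by blast
    qed
  qed auto
  have p1: "(\<Prod>i\<in>{1..n}. x i - inverse (x i)) = (\<Prod>i<n. x (Suc i) - inverse (x (Suc i)))"
    unfolding s1 by (subst prod.reindex) auto
  have s2: "{(i, j). 1 \<le> i \<and> i < j \<and> j \<le> n} = (\<lambda>(j,i). (Suc i, Suc j)) ` (SIGMA j:{..<n}. {..<j})"
  proof
    show "(\<lambda>(j,i). (Suc i, Suc j)) ` (SIGMA j:{..<n}. {..<j}) \<subseteq> {(i, j). 1 \<le> i \<and> i < j \<and> j \<le> n}" by auto
    show "{(i, j). 1 \<le> i \<and> i < j \<and> j \<le> n} \<subseteq> (\<lambda>(j,i). (Suc i, Suc j)) ` (SIGMA j:{..<n}. {..<j})"
    proof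
      fix p assume "p \<in> {(i, j). 1 \<le> i \<and> i < j \<and> j \<le> n}"
      then obtain i j where p: "p = (i,j)" and h: "1 \<le> i" "i < j" "j \<le> n" by auto
      have "(j - 1, i - 1) \<in> (SIGMA j:{..<n}. {..<j})" using h by auto
      moreover have "p = (\<lambda>(j,i). (Suc i, Suc j)) (j - 1, i - 1)" using h p by auto
      ultimately show "p \<in> (\<lambda>(j,i). (Suc i, Suc j)) ` (SIGMA j:{..<n}. {..<j})" by blast
    qed
  qed
  have inj: "inj_on (\<lambda>(j,i). (Suc i, Suc j)) (SIGMA j:{..<n}. {..<j})" by (auto simp: inj_on_def)
  have p2: "(\<Prod>(i, j)\<in>{(i, j). 1 \<le> i \<and> i < j \<and> j \<le> n}. x i + inverse (x i) - x j - inverse (x j))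
     = (\<Prod>j<n. \<Prod>i<j. tt (x (Suc i)) - tt (x (Suc j)))"
  proof -
    have "(\<Prod>j<n. \<Prod>i<j. tt (x (Suc i)) - tt (x (Suc j))) = (\<Prod>(j,i)\<in>(SIGMA j:{..<n}. {..<j}). tt (x (Suc i)) - tt (x (Suc j)))"
      by (rule prod.Sigma) auto
    also have "\<dots> = (\<Prod>p\<in>(SIGMA j:{..<n}. {..<j}). ((\<lambda>(i, j). x i + inverse (x i) - x j - inverse (x j)) \<circ> (\<lambda>(j,i). (Suc i, Suc j))) p)"
      by (intro prod.cong refl) (auto simp: tt_def algebra_simps)
    also have "\<dots> = (\<Prod>(i, j)\<in>(\<lambda>(j,i). (Suc i, Suc j)) ` (SIGMA j:{..<n}. {..<j}). x i + inverse (x i) - x j - inverse (x j))"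
      by (rule prod.reindex[OF inj, symmetric])
    finally show ?thesis unfolding s2 by simp
  qed
  show ?thesis unfolding p1 p2 Dn_closed ..
qed




theorem corollary1p4:
  fixes n :: nat and lam :: "nat list" and x :: "nat \<Rightarrow> 'a::field" and y :: 'a
  assumes "n \<ge> 1"
    and "length lam = n" and "sorted_wrt (\<ge>) lam"
    and "\<forall>i\<in>{1..n}. x i \<noteq> 0"
    and "(\<Prod>i\<in>{1..n}. x i - inverse (x i)) *
         (\<Prod>(i, j)\<in>{(i, j). 1 \<le> i \<and> i < j \<and> j \<le> n}.
            x i + inverse (x i) - x j - inverse (x j)) \<noteq> 0"
  shows "spo n 1 lam x (\<lambda>_. y) =
    det (mat n n (\<lambda>(i, j).
        x (Suc i) ^ (lam ! j + n - j) - inverse (x (Suc i)) ^ (lam ! j + n - j)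
        + y * (x (Suc i) ^ (lam ! j + n - j - 1) - inverse (x (Suc i)) ^ (lam ! j + n - j - 1))))
    / ((\<Prod>i\<in>{1..n}. x i - inverse (x i)) *
       (\<Prod>(i, j)\<in>{(i, j). 1 \<le> i \<and> i < j \<and> j \<le> n}.
          x i + inverse (x i) - x j - inverse (x j)))"
proof -
  define s where "s = (\<lambda>r. if r < n then lam ! r else 0)"
  define X where "X = (\<lambda>i. x (Suc i))"
  have mono: "s (Suc r) \<le> s r" for r
  proof (cases "Suc r < n")
    case True
    have "lam ! (Suc r) \<le> lam ! r" using sorted_wrt_nth_less[OF assms(3), of r "Suc r"] True assms(2) by simp
    thus ?thesis using True by (simp add: s_def)
  qed (simp add: s_def)
  have s0: "s r = 0" if "n \<le> r" for r using that by (simp add: s_def)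
  have Xnz: "X i \<noteq> 0" if "i < n" for i using assms(4) that by (simp add: X_def)
  have DD: "(\<Prod>i\<in>{1..n}. x i - inverse (x i)) *
       (\<Prod>(i, j)\<in>{(i, j). 1 \<le> i \<and> i < j \<and> j \<le> n}. x i + inverse (x i) - x j - inverse (x j)) = Dn X n"
    unfolding X_def by (rule D_eq)
  have D: "Dn X n \<noteq> 0" using assms(5) unfolding DD .
  have "spo n 1 lam x (\<lambda>_. y) = (\<Sum>U\<in>OT n s. W' X y n s U)"
    using translate[OF assms(2), of x y] by (simp add: s_def X_def)
  also have "\<dots> = (\<Sum>\<nu>\<in>VS n s. (\<Prod>r<n. y ^ (s r - \<nu> r)) * SP X (2*n) n \<nu>)"
    by (rule V[of s n, OF mono s0])
  finally have sp: "spo n 1 lam x (\<lambda>_. y) = \<dots>" .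
  have "Dn X n * spo n 1 lam x (\<lambda>_. y) = (\<Sum>\<nu>\<in>VS n s. (\<Prod>r<n. y ^ (s r - \<nu> r)) * (Dn X n * SP X (2*n) n \<nu>))"
    unfolding sp sum_distrib_left by (simp add: mult_ac)
  also have "\<dots> = (\<Sum>\<nu>\<in>VS n s. (\<Prod>r<n. y ^ (s r - \<nu> r)) * Adet X n \<nu>)"
  proof (intro sum.cong refl arg_cong2[where f="(*)"])
    fix \<nu> assume nu: "\<nu> \<in> VS n s"
    show "Dn X n * SP X (2*n) n \<nu> = Adet X n \<nu>"
    proof (rule King)
      show "\<And>i. i < n \<Longrightarrow> X i \<noteq> 0" by (rule Xnz)
      fix r
      show "\<nu> (Suc r) \<le> \<nu> r" using nu by (cases "r < n") (auto simp: VS_def)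
      show "n \<le> r \<Longrightarrow> \<nu> r = 0" using nu by (auto simp: VS_def)
    qed
  qed
  also have "\<dots> = det (mat n n (\<lambda>(i,j). Fp (s j + n - j) (X i) + y * Fp (s j + n - j - 1) (X i)))"
    by (rule detY[symmetric]) (rule mono)
  also have "\<dots> = det (mat n n (\<lambda>(i, j).
        x (Suc i) ^ (lam ! j + n - j) - inverse (x (Suc i)) ^ (lam ! j + n - j)
        + y * (x (Suc i) ^ (lam ! j + n - j - 1) - inverse (x (Suc i)) ^ (lam ! j + n - j - 1))))"
    by (rule det_mat_cong) (simp add: s_def X_def Fp_def)
  finally have main: "Dn X n * spo n 1 lam x (\<lambda>_. y) = det (mat n n (\<lambda>(i, j).
        x (Suc i) ^ (lam ! j + n - j) - inverse (x (Suc i)) ^ (lam ! j + n - j)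
        + y * (x (Suc i) ^ (lam ! j + n - j - 1) - inverse (x (Suc i)) ^ (lam ! j + n - j - 1))))" .
  show ?thesis unfolding DD using main D by (simp add: eq_divide_eq mult.commute[of "Dn X n"])
qed


end
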